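(* Let $G$ be a connected chordal graph that is not complete, and let $\mathbb S=\{S_1,\dots,S_r\}$ be its set of minimal vertex separators. Then $\kappa(G)=a(G)$ if and only if $\bigcap_{i=1}^r S_i$ is itself a minimal vertex separator of $G$ all of whose vertices are universal vertices of $G$. Moreover, if $G$ has a minimal vertex separator $S$ consisting of universal vertices, then $S$ is contained in every minimal vertex separator of $G$, and it is the unique minimal vertex separator of $G$ consisting of universal vertices.
   Context: All graphs are finite, simple and undirected. A graph is chordal if every cycle of length at least four has a chord. For non-adjacent vertices $u,v$, a set $S\subset V$ is a $uv$-separator if $u$ and $v$ lie in distinct connected components of $G[V\setminus S]$; it is a minimal $uv$-separator if no proper subset of $S$ is a $uv$-separator. A minimal vertex separator is a set that is a minimal $uv$-separator for some pair of non-adjacent vertices $u,v$. The Laplacian matrix is $L(G)=D(G)-A(G)$ (degree matrix minus adjacency matrix); $a(G)$, the algebraic connectivity, is the second smallest Laplacian eigenvalue (counted with multiplicity). $\kappa(G)$ is the vertex connectivity, i.e. the minimum size of a set whose removal disconnects $G$. A vertex is universal if it is adjacent to all other vertices. *)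

theory Defs
  imports "Jordan_Normal_Form.Char_Poly"
begin

definition simple_graph :: "nat \<Rightarrow> (nat \<Rightarrow> nat \<Rightarrow> bool) \<Rightarrow> bool" where
  "simple_graph n E \<longleftrightarrow> (\<forall>i j. E i j \<longrightarrow> i < n \<and> j < n \<and> i \<noteq> j \<and> E j i)"

definition verts :: "nat \<Rightarrow> nat set" where
  "verts n = {0..<n}"

definition induced_rel :: "(nat \<Rightarrow> nat \<Rightarrow> bool) \<Rightarrow> nat set \<Rightarrow> (nat \<times> nat) set" where
  "induced_rel E W = {(x, y). x \<in> W \<and> y \<in> W \<and> E x y}"

definition connected_on :: "(nat \<Rightarrow> nat \<Rightarrow> bool) \<Rightarrow> nat set \<Rightarrow> bool" where
  "connected_on E W \<longleftrightarrow> (\<forall>u\<in>W. \<forall>v\<in>W. (u, v) \<in> (induced_rel E W)\<^sup>*)"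

definition complete_graph :: "nat \<Rightarrow> (nat \<Rightarrow> nat \<Rightarrow> bool) \<Rightarrow> bool" where
  "complete_graph n E \<longleftrightarrow> (\<forall>i\<in>verts n. \<forall>j\<in>verts n. i \<noteq> j \<longrightarrow> E i j)"

text \<open>Chordal: every cycle (distinct vertices, consecutive ones adjacent, cyclically)
  of length at least four has a chord, i.e. an edge between two non-consecutive cycle vertices.\<close>
definition chordal :: "nat \<Rightarrow> (nat \<Rightarrow> nat \<Rightarrow> bool) \<Rightarrow> bool" where
  "chordal n E \<longleftrightarrow>
    (\<forall>cs. length cs \<ge> 4 \<and> distinct cs \<and> set cs \<subseteq> verts n \<and>
          (\<forall>i < length cs. E (cs ! i) (cs ! ((i + 1) mod length cs)))
      \<longrightarrow> (\<exists>i < length cs. \<exists>j < length cs. i \<noteq> j \<and>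
             j \<noteq> (i + 1) mod length cs \<and> i \<noteq> (j + 1) mod length cs \<and> E (cs ! i) (cs ! j)))"

definition uv_separator :: "nat \<Rightarrow> (nat \<Rightarrow> nat \<Rightarrow> bool) \<Rightarrow> nat set \<Rightarrow> nat \<Rightarrow> nat \<Rightarrow> bool" where
  "uv_separator n E S u v \<longleftrightarrow> S \<subseteq> verts n \<and> u \<in> verts n - S \<and> v \<in> verts n - S \<and>
     (u, v) \<notin> (induced_rel E (verts n - S))\<^sup>*"

definition minimal_uv_separator :: "nat \<Rightarrow> (nat \<Rightarrow> nat \<Rightarrow> bool) \<Rightarrow> nat set \<Rightarrow> nat \<Rightarrow> nat \<Rightarrow> bool" where
  "minimal_uv_separator n E S u v \<longleftrightarrow> uv_separator n E S u v \<and>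
     (\<forall>T. T \<subset> S \<longrightarrow> \<not> uv_separator n E T u v)"

definition minimal_vertex_separator :: "nat \<Rightarrow> (nat \<Rightarrow> nat \<Rightarrow> bool) \<Rightarrow> nat set \<Rightarrow> bool" where
  "minimal_vertex_separator n E S \<longleftrightarrow>
     (\<exists>u\<in>verts n. \<exists>v\<in>verts n. u \<noteq> v \<and> \<not> E u v \<and> minimal_uv_separator n E S u v)"

definition universal :: "nat \<Rightarrow> (nat \<Rightarrow> nat \<Rightarrow> bool) \<Rightarrow> nat \<Rightarrow> bool" where
  "universal n E x \<longleftrightarrow> x \<in> verts n \<and> (\<forall>w\<in>verts n. w \<noteq> x \<longrightarrow> E x w)"

definition vertex_connectivity :: "nat \<Rightarrow> (nat \<Rightarrow> nat \<Rightarrow> bool) \<Rightarrow> nat" where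
  "vertex_connectivity n E =
     Min {card S | S. S \<subseteq> verts n \<and> \<not> connected_on E (verts n - S)}"

definition laplacian :: "nat \<Rightarrow> (nat \<Rightarrow> nat \<Rightarrow> bool) \<Rightarrow> real mat" where
  "laplacian n E = mat n n (\<lambda>(i, j).
     (if i = j then real (card {k. k < n \<and> E i k}) else 0) - (if E i j then 1 else 0))"

text \<open>Second smallest eigenvalue counted with (algebraic) multiplicity: the least eigenvalue mu
  such that the eigenvalues \<le> mu, counted with multiplicity as roots of the
  characteristic polynomial, number at least two.\<close>
definition second_smallest_eigenvalue :: "real mat \<Rightarrow> real" where
  "second_smallest_eigenvalue A =
     (LEAST mu. eigenvalue A mu \<and>
        (\<Sum>nu \<in> {nu. eigenvalue A nu \<and> nu \<le> mu}. order nu (char_poly A)) \<ge> 2)"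

definition algebraic_connectivity :: "nat \<Rightarrow> (nat \<Rightarrow> nat \<Rightarrow> bool) \<Rightarrow> real" where
  "algebraic_connectivity n E = second_smallest_eigenvalue (laplacian n E)"

end

theory Submission
  imports Defs
begin


lemma sum_shift0:
  "(\<Sum>k=0..<Suc m. f k) = f 0 + (\<Sum>k=0..<m. f (Suc k))"
  using sum.atLeast0_lessThan_Suc_shift[of f m] by (simp only: comp_def)

lemma mult_idx:
  assumes "A \<in> carrier_mat nr n" "B \<in> carrier_mat n nc" "i < nr" "j < nc"
  shows "(A * B) $$ (i,j) = (\<Sum>k=0..<n. A $$ (i,k) * B $$ (k,j))"
  using assms by (simp add: scalar_prod_def)

lemma mult_vec_idx:
  assumes "A \<in> carrier_mat nr n" "v \<in> carrier_vec n" "i < nr"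
  shows "(A *\<^sub>v v) $ i = (\<Sum>k=0..<n. A $$ (i,k) * v $ k)"
  using assms by (simp add: scalar_prod_def)

definition diagm :: "real list \<Rightarrow> real mat" where
  "diagm ls = mat (length ls) (length ls) (\<lambda>(i,j). if i = j then ls ! i else 0)"

lemma diagm_carrier[simp]: "diagm ls \<in> carrier_mat (length ls) (length ls)"
  by (simp add: diagm_def)

lemma mult_diagm_idx:
  assumes "X \<in> carrier_mat nr n" "length ls = n" "i < nr" "j < n"
  shows "(X * diagm ls) $$ (i,j) = X $$ (i,j) * ls ! j"
proof -
  have "(X * diagm ls) $$ (i,j) = (\<Sum>k=0..<n. X $$ (i,k) * diagm ls $$ (k,j))"
    using assms by (intro mult_idx) auto
  also have "\<dots> = (\<Sum>k=0..<n. if k = j then X $$ (i,k) * ls ! k else 0)"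
    using assms by (intro sum.cong) (auto simp: diagm_def)
  also have "\<dots> = X $$ (i,j) * ls ! j" using assms by simp
  finally show ?thesis .
qed

lemma real_eigenvector:
  fixes A :: "real mat"
  assumes A: "A \<in> carrier_mat n n" and sym: "\<And>i j. i<n \<Longrightarrow> j<n \<Longrightarrow> A$$(i,j) = A$$(j,i)"
    and n: "n > 0"
  shows "\<exists>l v. v \<in> carrier_vec n \<and> v \<noteq> 0\<^sub>v n \<and> A *\<^sub>v v = l \<cdot>\<^sub>v v"
proof -
  define Ac where "Ac = map_mat complex_of_real A"
  have Ac: "Ac \<in> carrier_mat n n" using A by (simp add: Ac_def)
  obtain as where cp: "char_poly Ac = (\<Prod>a\<leftarrow>as. [:-a,1:])" and len: "length as = n"
    using char_poly_factorized[OF Ac] by blast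
  define z where "z = hd as"
  have zin: "z \<in> set as" using len n by (cases as) (auto simp: z_def)
  have "poly (char_poly Ac) z = 0" unfolding cp using zin
    by (simp add: poly_prod_list prod_list_zero_iff)
  hence "eigenvalue Ac z" using eigenvalue_root_char_poly[OF Ac] by simp
  then obtain w where ev: "eigenvector Ac w z" unfolding eigenvalue_def by blast
  hence w: "w \<in> carrier_vec n" "w \<noteq> 0\<^sub>v n" "Ac *\<^sub>v w = z \<cdot>\<^sub>v w"
    using Ac unfolding eigenvector_def by auto
  have eq: "(\<Sum>j=0..<n. complex_of_real (A$$(i,j)) * w$j) = z * w$i" if "i < n" for i
  proof -
    have "(Ac *\<^sub>v w) $ i = (z \<cdot>\<^sub>v w) $ i" using w by simp
    moreover have "(Ac *\<^sub>v w) $ i = (\<Sum>j=0..<n. Ac $$ (i,j) * w$j)"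
      by (rule mult_vec_idx[OF Ac w(1) that])
    moreover have "(\<Sum>j=0..<n. Ac $$ (i,j) * w$j) = (\<Sum>j=0..<n. complex_of_real (A$$(i,j)) * w$j)"
      using A that by (intro sum.cong) (auto simp: Ac_def)
    ultimately show ?thesis using that w by simp
  qed
  define S where "S = (\<Sum>i=0..<n. cnj (w$i) * (\<Sum>j=0..<n. complex_of_real (A$$(i,j)) * w$j))"
  define N where "N = (\<Sum>i=0..<n. cnj (w$i) * w$i)"
  have "S = (\<Sum>i=0..<n. cnj (w$i) * (z * w$i))" unfolding S_def
    by (intro sum.cong) (auto simp: eq)
  hence SN: "S = z * N" unfolding N_def
    by (simp add: sum_distrib_left mult_ac)
  have "cnj S = (\<Sum>i=0..<n. \<Sum>j=0..<n. w$i * complex_of_real (A$$(i,j)) * cnj (w$j))"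
    unfolding S_def by (simp add: sum_distrib_left mult_ac)
  also have "\<dots> = (\<Sum>j=0..<n. \<Sum>i=0..<n. w$i * complex_of_real (A$$(i,j)) * cnj (w$j))"
    by (rule sum.swap)
  also have "\<dots> = S" unfolding S_def
    by (simp add: sum_distrib_left mult_ac sym)
  finally have cS: "cnj S = S" .
  obtain i0 where i0: "i0 < n" "w $ i0 \<noteq> 0" using w by (metis eq_vecI carrier_vecD index_zero_vec)
  have Nreal: "N = complex_of_real (\<Sum>i=0..<n. (cmod (w$i))^2)"
    unfolding N_def of_real_sum
    by (intro sum.cong) (auto simp: complex_norm_square[symmetric] mult.commute simp del: of_real_power)
  have "(\<Sum>i=0..<n. (cmod (w$i))^2) \<ge> (cmod (w$i0))^2"
    by (rule member_le_sum) (use i0 in auto)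
  moreover have "(cmod (w$i0))^2 > 0" using i0 by simp
  ultimately have "(\<Sum>i=0..<n. (cmod (w$i))^2) \<noteq> 0" by linarith
  hence "N \<noteq> 0" unfolding Nreal of_real_eq_0_iff by simp
  moreover have "cnj z * N = z * N"
    using cS SN Nreal by (metis complex_cnj_complex_of_real complex_cnj_mult)
  ultimately have "cnj z = z" by simp
  hence zr: "z = complex_of_real (Re z)" by (metis Reals_cnj_iff Re_complex_of_real Reals_cases)
  define l where "l = Re z"
  have req: "(\<Sum>j=0..<n. A$$(i,j) * Re (w$j)) = l * Re (w$i)"
    and ieq: "(\<Sum>j=0..<n. A$$(i,j) * Im (w$j)) = l * Im (w$i)" if "i < n" for i
  proof -
    have "Re (\<Sum>j=0..<n. complex_of_real (A$$(i,j)) * w$j) = Re (z * w$i)" using eq[OF that] by simp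
    thus "(\<Sum>j=0..<n. A$$(i,j) * Re (w$j)) = l * Re (w$i)"
      by (subst (asm) zr) (simp add: Re_sum l_def)
    have "Im (\<Sum>j=0..<n. complex_of_real (A$$(i,j)) * w$j) = Im (z * w$i)" using eq[OF that] by simp
    thus "(\<Sum>j=0..<n. A$$(i,j) * Im (w$j)) = l * Im (w$i)"
      by (subst (asm) zr) (simp add: Im_sum l_def)
  qed
  show ?thesis
  proof (cases "Re (w$i0) = 0")
    case True
    hence "Im (w$i0) \<noteq> 0" using i0 complex_eq_iff by auto
    define v where "v = vec n (\<lambda>i. Im (w$i))"
    have "v \<noteq> 0\<^sub>v n" using i0 \<open>Im (w$i0) \<noteq> 0\<close> v_def
      by (metis index_vec index_zero_vec(1))
    moreover have "A *\<^sub>v v = l \<cdot>\<^sub>v v"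
    proof (rule eq_vecI)
      fix i assume i: "i < dim_vec (l \<cdot>\<^sub>v v)"
      have "(A *\<^sub>v v) $ i = (\<Sum>j=0..<n. A$$(i,j) * v$j)"
        using A i by (intro mult_vec_idx[OF A]) (auto simp: v_def)
      also have "\<dots> = (\<Sum>j=0..<n. A$$(i,j) * Im (w$j))" by (intro sum.cong) (auto simp: v_def)
      also have "\<dots> = (l \<cdot>\<^sub>v v) $ i" using i by (simp add: ieq v_def)
      finally show "(A *\<^sub>v v) $ i = (l \<cdot>\<^sub>v v) $ i" .
    qed (use A in \<open>auto simp: v_def\<close>)
    moreover have "v \<in> carrier_vec n" by (simp add: v_def)
    ultimately show ?thesis by blast
  next
    case False
    define v where "v = vec n (\<lambda>i. Re (w$i))"
    have "v \<noteq> 0\<^sub>v n" using i0 False v_def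
      by (metis index_vec index_zero_vec(1))
    moreover have "A *\<^sub>v v = l \<cdot>\<^sub>v v"
    proof (rule eq_vecI)
      fix i assume i: "i < dim_vec (l \<cdot>\<^sub>v v)"
      have "(A *\<^sub>v v) $ i = (\<Sum>j=0..<n. A$$(i,j) * v$j)"
        using A i by (intro mult_vec_idx[OF A]) (auto simp: v_def)
      also have "\<dots> = (\<Sum>j=0..<n. A$$(i,j) * Re (w$j))" by (intro sum.cong) (auto simp: v_def)
      also have "\<dots> = (l \<cdot>\<^sub>v v) $ i" using i by (simp add: req v_def)
      finally show "(A *\<^sub>v v) $ i = (l \<cdot>\<^sub>v v) $ i" .
    qed (use A in \<open>auto simp: v_def\<close>)
    moreover have "v \<in> carrier_vec n" by (simp add: v_def)
    ultimately show ?thesis by blast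
  qed
qed

lemma sq_sum_pos:
  fixes f :: "nat \<Rightarrow> real"
  assumes "i0 < n" "f i0 \<noteq> 0"
  shows "(\<Sum>i=0..<n. f i * f i) > 0"
proof -
  have "(\<Sum>i=0..<n. f i * f i) \<ge> f i0 * f i0"
    by (rule member_le_sum) (use assms in auto)
  moreover have "f i0 * f i0 > 0" by (metis assms(2) not_real_square_gt_zero)
  ultimately show ?thesis by linarith
qed

lemma unit_eigenvector:
  fixes A :: "real mat"
  assumes A: "A \<in> carrier_mat n n" and sym: "\<And>i j. i<n \<Longrightarrow> j<n \<Longrightarrow> A$$(i,j) = A$$(j,i)"
    and n: "n > 0"
  shows "\<exists>l v. v \<in> carrier_vec n \<and> v \<bullet> v = 1 \<and> A *\<^sub>v v = l \<cdot>\<^sub>v v"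
proof -
  obtain l v where v: "v \<in> carrier_vec n" "v \<noteq> 0\<^sub>v n" "A *\<^sub>v v = l \<cdot>\<^sub>v v"
    using real_eigenvector[OF A sym n] by blast
  obtain i0 where i0: "i0 < n" "v $ i0 \<noteq> 0" using v by (metis eq_vecI carrier_vecD index_zero_vec)
  have vv: "v \<bullet> v = (\<Sum>i=0..<n. v$i * v$i)" using v by (simp add: scalar_prod_def)
  have pos: "v \<bullet> v > 0" unfolding vv by (rule sq_sum_pos[of i0 n "\<lambda>i. v$i"]) (use i0 in auto)
  define c where "c = 1 / sqrt (v \<bullet> v)"
  define v' where "v' = c \<cdot>\<^sub>v v"
  have "v' \<bullet> v' = c * c * (v \<bullet> v)" unfolding v'_def using v by simp
  also have "\<dots> = 1" using pos unfolding c_def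
    by (simp add: field_simps)
  finally have "v' \<bullet> v' = 1" .
  moreover have "A *\<^sub>v v' = l \<cdot>\<^sub>v v'" unfolding v'_def using v A
    by (simp add: mult_mat_vec smult_smult_assoc mult.commute)
  moreover have "v' \<in> carrier_vec n" using v by (simp add: v'_def)
  ultimately show ?thesis by blast
qed

lemma hh_sum:
  fixes u :: "nat \<Rightarrow> real"
  assumes ij: "i < n" "j < n" and uu: "uu = (\<Sum>k=0..<n. u k * u k)" "uu \<noteq> 0"
  shows "(\<Sum>k=0..<n. ((if i=k then 1 else 0) - 2*u i*u k/uu) * ((if k=j then 1 else 0) - 2*u k*u j/uu))
     = (if i = j then 1 else 0)"
proof -
  have "(\<Sum>k=0..<n. ((if i=k then 1 else 0) - 2*u i*u k/uu) * ((if k=j then 1 else 0) - 2*u k*u j/uu))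
     = (\<Sum>k=0..<n. (if i = k \<and> k = j then 1 else 0) - (if i = k then 2*u k*u j/uu else 0)
          - (if k = j then 2 * u i * u k/uu else 0) + (4 * u i * u j / (uu*uu)) * (u k * u k))"
    using uu(2) by (intro sum.cong) (auto simp: field_simps)
  also have "\<dots> = (if i = j then 1 else 0) - 2*u i*u j/uu - 2 * u i * u j/uu + (4 * u i * u j / (uu*uu)) * uu"
  proof -
    have a: "(\<Sum>k=0..<n. if i = k \<and> k = j then 1 else (0::real)) = (if i = j then 1 else 0)"
    proof -
      have "(\<lambda>k. if i = k \<and> k = j then 1 else (0::real)) = (\<lambda>k. if k = j then (if i = j then 1 else 0) else 0)"
        by auto
      hence "(\<Sum>k=0..<n. if i = k \<and> k = j then 1 else (0::real)) = (\<Sum>k=0..<n. if k = j then (if i = j then 1 else 0) else 0)"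
        by (simp only:)
      also have "\<dots> = (if i = j then 1 else 0)" using ij by (subst sum.delta) auto
      finally show ?thesis .
    qed
    have b: "(\<Sum>k=0..<n. if i = k then 2*u k*u j/uu else 0) = 2*u i*u j/uu"
      using ij by (simp add: sum.delta)
    have c: "(\<Sum>k=0..<n. if k = j then 2*u i*u k/uu else 0) = 2*u i*u j/uu"
      using ij by (simp add: sum.delta')
    have d: "(\<Sum>k=0..<n. (4 * u i * u j / (uu*uu)) * (u k * u k)) = (4 * u i * u j / (uu*uu)) * uu"
      by (simp only: sum_distrib_left[symmetric] uu(1)[symmetric])
    show ?thesis by (simp only: sum.distrib sum_subtractf a b c d)
  qed
  also have "\<dots> = (if i = j then 1 else 0)" using uu(2) by (simp add: field_simps)
  finally show ?thesis .
qed

lemma householder: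
  fixes v :: "real vec"
  assumes v: "v \<in> carrier_vec n" and nv: "v \<bullet> v = 1" and n: "n > 0"
  shows "\<exists>H. H \<in> carrier_mat n n \<and> H\<^sup>T = H \<and> H * H = 1\<^sub>m n \<and> (\<forall>i<n. H $$ (i,0) = v $ i)"
proof -
  have vv: "(\<Sum>i=0..<n. v$i * v$i) = 1" using v nv by (simp add: scalar_prod_def)
  show ?thesis
  proof (cases "v $ 0 = 1")
    case True
    have split: "(\<Sum>i=0..<n. v$i * v$i) = v$0 * v$0 + (\<Sum>i\<in>{0..<n}-{0}. v$i * v$i)"
      using n by (subst sum.remove[of _ 0]) auto
    hence "(\<Sum>i\<in>{0..<n}-{0}. v$i * v$i) = 0" using vv True by simp
    hence z: "\<forall>i\<in>{0..<n}-{0}. v$i * v$i = 0"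
      by (subst (asm) sum_nonneg_eq_0_iff) auto
    have "\<forall>i<n. (1\<^sub>m n :: real mat) $$ (i,0) = v $ i"
    proof (intro allI impI)
      fix i assume "i < n"
      thus "(1\<^sub>m n :: real mat) $$ (i,0) = v $ i" using z True n by (cases "i = 0") auto
    qed
    thus ?thesis by (intro exI[of _ "1\<^sub>m n"]) auto
  next
    case False
    define u where "u = (\<lambda>i. v$i - (if i = 0 then 1 else 0 :: real))"
    define uu where "uu = (\<Sum>k=0..<n. u k * u k)"
    have "uu = (\<Sum>k=0..<n. v$k * v$k - 2 * (if k = 0 then v$k else 0) + (if k = 0 then 1 else 0))"
      unfolding uu_def u_def by (intro sum.cong) (auto simp: field_simps)
    also have "\<dots> = 2 - 2 * v$0" using n vv
      by (simp add: sum.distrib sum_subtractf sum_distrib_left[symmetric])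
    finally have uu2: "uu = 2 - 2 * v$0" .
    hence uu0: "uu \<noteq> 0" using False by simp
    define H where "H = mat n n (\<lambda>(i,j). (if i = j then 1 else 0) - 2 * u i * u j / uu)"
    have Hc: "H \<in> carrier_mat n n" by (simp add: H_def)
    have "H\<^sup>T = H" by (rule eq_matI) (auto simp: H_def mult.commute)
    moreover have "H * H = 1\<^sub>m n"
    proof (rule eq_matI)
      fix i j assume ij: "i < dim_row (1\<^sub>m n :: real mat)" "j < dim_col (1\<^sub>m n :: real mat)"
      have "(H * H) $$ (i,j) = (\<Sum>k=0..<n. H$$(i,k) * H$$(k,j))"
        using ij by (intro mult_idx[OF Hc Hc]) auto
      also have "\<dots> = (\<Sum>k=0..<n. ((if i=k then 1 else 0) - 2*u i*u k/uu) * ((if k=j then 1 else 0) - 2*u k*u j/uu))"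
        using ij by (intro sum.cong) (auto simp: H_def)
      also have "\<dots> = (if i = j then 1 else 0)"
        using ij by (intro hh_sum[OF _ _ uu_def uu0]) auto
      finally show "(H * H) $$ (i,j) = (1\<^sub>m n :: real mat) $$ (i,j)" using ij by simp
    qed (auto simp: H_def)
    moreover have "\<forall>i<n. H $$ (i,0) = v $ i"
    proof (intro allI impI)
      fix i assume i: "i < n"
      have h: "H $$ (i,0) = (if i = 0 then 1 else 0) - 2 * u i * u 0 / uu" using i n by (simp add: H_def)
      have u0: "uu = - 2 * u 0" using uu2 by (simp add: u_def)
      have "2 * u i * u 0 / uu = - u i" using uu0 unfolding u0 by (simp add: field_simps)
      hence "H $$ (i,0) = (if i = 0 then 1 else 0) + u i" using h by simp
      thus "H $$ (i,0) = v $ i" by (simp add: u_def)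
    qed
    ultimately show ?thesis using Hc by blast
  qed
qed

lemma spectral_aux:
  fixes A :: "real mat"
  assumes "A \<in> carrier_mat n n" "A\<^sup>T = A"
  shows "\<exists>P ls. P \<in> carrier_mat n n \<and> P\<^sup>T * P = 1\<^sub>m n \<and> P * P\<^sup>T = 1\<^sub>m n \<and> length ls = n
     \<and> A * P = P * diagm ls"
  using assms
proof (induction n arbitrary: A)
  case 0
  show ?case
    by (intro exI[of _ "1\<^sub>m 0"] exI[of _ "[]::real list"]) (use 0 in \<open>auto intro!: eq_matI simp: diagm_def\<close>)
next
  case (Suc m A)
  define n where "n = Suc m"
  have A: "A \<in> carrier_mat n n" and AT: "A\<^sup>T = A" using Suc.prems by (auto simp: n_def)
  have sym: "A$$(i,j) = A$$(j,i)" if "i < n" "j < n" for i j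
    by (metis AT that A index_transpose_mat(1) carrier_matD)
  have n0: "n > 0" by (simp add: n_def)
  obtain l v where v: "v \<in> carrier_vec n" "v \<bullet> v = 1" "A *\<^sub>v v = l \<cdot>\<^sub>v v"
    using unit_eigenvector[OF A sym n0] by auto
  obtain H where H: "H \<in> carrier_mat n n" "H\<^sup>T = H" "H * H = 1\<^sub>m n" and Hc: "\<forall>i<n. H$$(i,0) = v$i"
    using householder[OF v(1,2) n0] by auto
  have colH: "col H 0 = v" by (rule eq_vecI) (use H Hc v n0 in auto)
  define A' where "A' = H * A * H"
  have A'c: "A' \<in> carrier_mat n n" using H A by (simp add: A'_def)
  have A'T: "A'\<^sup>T = A'"
  proof -
    have "A'\<^sup>T = H\<^sup>T * (H * A)\<^sup>T" unfolding A'_def using H A by (simp add: transpose_mult[of _ n n _ n])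
    also have "\<dots> = H * (A * H)" using H A AT by (simp add: transpose_mult[of _ n n _ n])
    also have "\<dots> = A'" unfolding A'_def using H A by (simp add: assoc_mult_mat[of _ n n _ n _ n])
    finally show ?thesis .
  qed
  have symA': "A'$$(i,j) = A'$$(j,i)" if "i < n" "j < n" for i j
    by (metis A'T that A'c index_transpose_mat(1) carrier_matD)
  have colA': "col A' 0 = l \<cdot>\<^sub>v unit_vec n 0"
  proof -
    have "col A' 0 = (H * A) *\<^sub>v col H 0" unfolding A'_def using H A n0 by (intro col_mult2) auto
    also have "\<dots> = H *\<^sub>v (A *\<^sub>v v)" using H A v colH by (simp add: assoc_mult_mat_vec[of _ n n _ n])
    also have "\<dots> = l \<cdot>\<^sub>v (H *\<^sub>v col H 0)" using H v colH by (simp add: mult_mat_vec)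
    also have "H *\<^sub>v col H 0 = col (H * H) 0" using H n0 by (intro col_mult2[symmetric]) auto
    also have "\<dots> = unit_vec n 0" using H n0 by simp
    finally show ?thesis .
  qed
  have A'0: "A'$$(i,0) = (if i = 0 then l else 0)" if "i < n" for i
  proof -
    have "A'$$(i,0) = col A' 0 $ i" using that A'c n0 by simp
    thus ?thesis using that colA' by simp
  qed
  define A3 where "A3 = mat m m (\<lambda>(i,j). A'$$(Suc i, Suc j))"
  have A3c: "A3 \<in> carrier_mat m m" by (simp add: A3_def)
  have A3T: "A3\<^sup>T = A3" by (rule eq_matI) (auto simp: A3_def n_def intro: symA')
  obtain P3 ls3 where P3: "P3 \<in> carrier_mat m m" "P3\<^sup>T * P3 = 1\<^sub>m m" "P3 * P3\<^sup>T = 1\<^sub>m m"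
    "length ls3 = m" "A3 * P3 = P3 * diagm ls3"
    using Suc.IH[OF A3c A3T] by blast
  define F where "F = mat n n (\<lambda>(i,j). if i = 0 \<and> j = 0 then 1 else if i = 0 \<or> j = 0 then 0 else P3$$(i-1,j-1))"
  have Fc: "F \<in> carrier_mat n n" by (simp add: F_def)
  have FTc: "F\<^sup>T \<in> carrier_mat n n" by (simp add: F_def)
  define ls where "ls = l # ls3"
  have lenls: "length ls = n" using P3 by (simp add: ls_def n_def)
  have P3TP3: "(\<Sum>k=0..<m. P3$$(k,i) * P3$$(k,j)) = (if i = j then 1 else 0)" if "i < m" "j < m" for i j
  proof -
    have "(P3\<^sup>T * P3) $$ (i,j) = (\<Sum>k=0..<m. P3\<^sup>T$$(i,k) * P3$$(k,j))"
      using P3 that by (intro mult_idx) auto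
    also have "\<dots> = (\<Sum>k=0..<m. P3$$(k,i) * P3$$(k,j))" using P3 that by (intro sum.cong) auto
    finally show ?thesis using P3 that by simp
  qed
  have P3P3T: "(\<Sum>k=0..<m. P3$$(i,k) * P3$$(j,k)) = (if i = j then 1 else 0)" if "i < m" "j < m" for i j
  proof -
    have "(P3 * P3\<^sup>T) $$ (i,j) = (\<Sum>k=0..<m. P3$$(i,k) * P3\<^sup>T$$(k,j))"
      using P3 that by (intro mult_idx) auto
    also have "\<dots> = (\<Sum>k=0..<m. P3$$(i,k) * P3$$(j,k))" using P3 that by (intro sum.cong) auto
    finally show ?thesis using P3 that by simp
  qed
  have A3P3: "(\<Sum>k=0..<m. A3$$(i,k) * P3$$(k,j)) = P3$$(i,j) * ls3!j" if "i < m" "j < m" for i j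
  proof -
    have "(A3 * P3) $$ (i,j) = (\<Sum>k=0..<m. A3$$(i,k) * P3$$(k,j))"
      using P3 A3c that by (intro mult_idx) auto
    moreover have "(P3 * diagm ls3) $$ (i,j) = P3$$(i,j) * ls3!j"
      using P3 that by (intro mult_diagm_idx) auto
    ultimately show ?thesis using P3 by simp
  qed
  have FTF: "F\<^sup>T * F = 1\<^sub>m n"
  proof (rule eq_matI)
    fix i j assume ij: "i < dim_row (1\<^sub>m n :: real mat)" "j < dim_col (1\<^sub>m n :: real mat)"
    have "(F\<^sup>T * F) $$ (i,j) = (\<Sum>k=0..<n. F\<^sup>T$$(i,k) * F$$(k,j))"
      using ij FTc Fc by (intro mult_idx) auto
    also have "\<dots> = (\<Sum>k=0..<n. F$$(k,i) * F$$(k,j))" using ij Fc by (intro sum.cong) auto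
    also have "\<dots> = F$$(0,i) * F$$(0,j) + (\<Sum>k=0..<m. F$$(Suc k,i) * F$$(Suc k,j))"
      unfolding n_def by (rule sum_shift0)
    also have "\<dots> = (if i = j then 1 else 0)"
    proof (cases i)
      case 0
      then show ?thesis using ij by (cases j) (auto simp: F_def n_def)
    next
      case (Suc i')
      show ?thesis
      proof (cases j)
        case 0
        then show ?thesis using ij Suc by (auto simp: F_def n_def)
      next
        case (Suc j')
        have "(\<Sum>k=0..<m. F$$(Suc k,i) * F$$(Suc k,j)) = (\<Sum>k=0..<m. P3$$(k,i') * P3$$(k,j'))"
          using ij \<open>i = Suc i'\<close> Suc by (intro sum.cong) (auto simp: F_def n_def)
        then show ?thesis using ij \<open>i = Suc i'\<close> Suc P3TP3[of i' j'] by (auto simp: F_def n_def)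
      qed
    qed
    finally show "(F\<^sup>T * F) $$ (i,j) = (1\<^sub>m n :: real mat) $$ (i,j)" using ij by simp
  qed (use Fc in auto)
  have FFT: "F * F\<^sup>T = 1\<^sub>m n"
  proof (rule eq_matI)
    fix i j assume ij: "i < dim_row (1\<^sub>m n :: real mat)" "j < dim_col (1\<^sub>m n :: real mat)"
    have "(F * F\<^sup>T) $$ (i,j) = (\<Sum>k=0..<n. F$$(i,k) * F\<^sup>T$$(k,j))"
      using ij FTc Fc by (intro mult_idx) auto
    also have "\<dots> = (\<Sum>k=0..<n. F$$(i,k) * F$$(j,k))" using ij Fc by (intro sum.cong) auto
    also have "\<dots> = F$$(i,0) * F$$(j,0) + (\<Sum>k=0..<m. F$$(i,Suc k) * F$$(j,Suc k))"
      unfolding n_def by (rule sum_shift0)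
    also have "\<dots> = (if i = j then 1 else 0)"
    proof (cases i)
      case 0
      then show ?thesis using ij by (cases j) (auto simp: F_def n_def)
    next
      case (Suc i')
      show ?thesis
      proof (cases j)
        case 0
        then show ?thesis using ij Suc by (auto simp: F_def n_def)
      next
        case (Suc j')
        have "(\<Sum>k=0..<m. F$$(i,Suc k) * F$$(j,Suc k)) = (\<Sum>k=0..<m. P3$$(i',k) * P3$$(j',k))"
          using ij \<open>i = Suc i'\<close> Suc by (intro sum.cong) (auto simp: F_def n_def)
        then show ?thesis using ij \<open>i = Suc i'\<close> Suc P3P3T[of i' j'] by (auto simp: F_def n_def)
      qed
    qed
    finally show "(F * F\<^sup>T) $$ (i,j) = (1\<^sub>m n :: real mat) $$ (i,j)" using ij by simp
  qed (use Fc in auto)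
  have A'F: "A' * F = F * diagm ls"
  proof (rule eq_matI)
    fix i j assume ij: "i < dim_row (F * diagm ls)" "j < dim_col (F * diagm ls)"
    hence ij': "i < n" "j < n" using Fc lenls by (auto simp: diagm_def)
    have "(A' * F) $$ (i,j) = (\<Sum>k=0..<n. A'$$(i,k) * F$$(k,j))"
      using ij' A'c Fc by (intro mult_idx) auto
    also have "\<dots> = A'$$(i,0) * F$$(0,j) + (\<Sum>k=0..<m. A'$$(i,Suc k) * F$$(Suc k,j))"
      unfolding n_def by (rule sum_shift0)
    also have "\<dots> = F$$(i,j) * ls!j"
    proof (cases j)
      case 0
      have "(\<Sum>k=0..<m. A'$$(i,Suc k) * F$$(Suc k,j)) = 0"
        using 0 by (intro sum.neutral) (auto simp: F_def n_def)
      then show ?thesis using 0 ij' A'0[of i] by (auto simp: F_def ls_def)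
    next
      case (Suc j')
      show ?thesis
      proof (cases i)
        case 0
        have "(\<Sum>k=0..<m. A'$$(i,Suc k) * F$$(Suc k,j)) = 0"
        proof (intro sum.neutral ballI)
          fix k assume "k \<in> {0..<m}"
          hence "A'$$(i,Suc k) = 0" using 0 symA'[of 0 "Suc k"] A'0[of "Suc k"] by (auto simp: n_def)
          thus "A'$$(i,Suc k) * F$$(Suc k,j) = 0" by simp
        qed
        then show ?thesis using 0 Suc ij' by (auto simp: F_def)
      next
        case (Suc i')
        have "(\<Sum>k=0..<m. A'$$(i,Suc k) * F$$(Suc k,j)) = (\<Sum>k=0..<m. A3$$(i',k) * P3$$(k,j'))"
          using ij' \<open>j = Suc j'\<close> Suc by (intro sum.cong) (auto simp: F_def A3_def n_def)
        also have "\<dots> = P3$$(i',j') * ls3!j'" using ij' \<open>j = Suc j'\<close> Suc by (intro A3P3) (auto simp: n_def)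
        finally show ?thesis using ij' \<open>j = Suc j'\<close> Suc by (auto simp: F_def ls_def)
      qed
    qed
    also have "\<dots> = (F * diagm ls) $$ (i,j)" using ij' Fc lenls by (intro mult_diagm_idx[symmetric]) auto
    finally show "(A' * F) $$ (i,j) = (F * diagm ls) $$ (i,j)" .
  qed (use Fc A'c lenls in \<open>auto simp: diagm_def\<close>)
  define P where "P = H * F"
  have Pc: "P \<in> carrier_mat n n" using H Fc by (simp add: P_def)
  have HA': "H * A' = A * H"
  proof -
    have "H * A' = H * ((H * A) * H)" by (simp add: A'_def)
    also have "\<dots> = (H * (H * A)) * H"
      by (rule assoc_mult_mat[symmetric, of _ n n _ n _ n]) (use H A in auto)
    also have "H * (H * A) = (H * H) * A"
      by (rule assoc_mult_mat[symmetric, of _ n n _ n _ n]) (use H A in auto)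
    also have "\<dots> = A" using H A by simp
    finally show ?thesis .
  qed
  have "A * P = (A * H) * F" unfolding P_def using H A Fc by (simp add: assoc_mult_mat[of _ n n _ n _ n])
  also have "\<dots> = H * (A' * F)" unfolding HA'[symmetric] using H A'c Fc by (simp add: assoc_mult_mat[of _ n n _ n _ n])
  also have "\<dots> = P * diagm ls" unfolding A'F P_def using H Fc lenls
    by (subst assoc_mult_mat[of _ n n _ n _ n]) auto
  finally have AP: "A * P = P * diagm ls" .
  have HHX: "H * (H * X) = X" if "X \<in> carrier_mat n n" for X
    using assoc_mult_mat[of H n n H n X n] H that by simp
  have FFX: "F * (F\<^sup>T * X) = X" if "X \<in> carrier_mat n n" for X
    using assoc_mult_mat[of F n n "F\<^sup>T" n X n] Fc FFT that by simp
  have PTP: "P\<^sup>T * P = 1\<^sub>m n"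
  proof -
    have "P\<^sup>T * P = F\<^sup>T * F" unfolding P_def using H Fc HHX
      by (simp add: transpose_mult[of _ n n _ n] assoc_mult_mat[of _ n n _ n _ n])
    also have "\<dots> = 1\<^sub>m n" using H Fc FTF HHX by simp
    finally show ?thesis .
  qed
  have PPT: "P * P\<^sup>T = 1\<^sub>m n"
  proof -
    have "P * P\<^sup>T = H * H" unfolding P_def using H Fc FFX
      by (simp add: transpose_mult[of _ n n _ n] assoc_mult_mat[of _ n n _ n _ n])
    also have "\<dots> = 1\<^sub>m n" using H Fc FFT HHX FFX by simp
    finally show ?thesis .
  qed
  show ?case using Pc PTP PPT lenls AP unfolding n_def by blast
qed


lemma spectral:
  fixes A :: "real mat"
  assumes A: "A \<in> carrier_mat n n" and AT: "A\<^sup>T = A"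
  shows "\<exists>P ls. P \<in> carrier_mat n n \<and> length ls = n \<and> char_poly A = (\<Prod>l\<leftarrow>ls. [:-l,1:]) \<and>
     (\<forall>j<n. \<forall>k<n. (\<Sum>i=0..<n. P$$(i,j) * P$$(i,k)) = (if j = k then 1 else 0)) \<and>
     (\<forall>i<n. \<forall>k<n. (\<Sum>j=0..<n. P$$(i,j) * P$$(k,j)) = (if i = k then 1 else 0)) \<and>
     (\<forall>i<n. \<forall>k<n. A$$(i,k) = (\<Sum>j=0..<n. P$$(i,j) * ls!j * P$$(k,j)))"
proof -
  obtain P ls where P: "P \<in> carrier_mat n n" "P\<^sup>T * P = 1\<^sub>m n" "P * P\<^sup>T = 1\<^sub>m n" "length ls = n"
     "A * P = P * diagm ls"
    using spectral_aux[OF A AT] by blast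
  define D where "D = diagm ls"
  have Dc: "D \<in> carrier_mat n n" using P diagm_carrier[of ls] by (simp add: D_def)
  have PT: "P\<^sup>T \<in> carrier_mat n n" using P by simp
  have AD: "A = P * D * P\<^sup>T"
  proof -
    have "A = A * (P * P\<^sup>T)" using P A by simp
    also have "\<dots> = (A * P) * P\<^sup>T" using P A by (intro assoc_mult_mat[symmetric, of _ n n _ n _ n]) auto
    finally show ?thesis unfolding D_def P(5) .
  qed
  have "similar_mat_wit A D P P\<^sup>T"
    unfolding similar_mat_wit_def Let_def using A Dc P PT AD by auto
  hence "char_poly A = char_poly D" by (intro char_poly_similar) (auto simp: similar_mat_def)
  also have "char_poly D = (\<Prod>a\<leftarrow>diag_mat D. [:- a, 1:])"
    by (rule char_poly_upper_triangular[OF Dc]) (auto simp: upper_triangular_def D_def diagm_def)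
  also have "diag_mat D = ls" using P
    by (auto simp: diag_mat_def D_def diagm_def intro!: nth_equalityI)
  finally have cp: "char_poly A = (\<Prod>l\<leftarrow>ls. [:-l,1:])" .
  have O1: "(\<Sum>i=0..<n. P$$(i,j) * P$$(i,k)) = (if j = k then 1 else 0)" if "j < n" "k < n" for j k
  proof -
    have "(P\<^sup>T * P) $$ (j,k) = (\<Sum>i=0..<n. P\<^sup>T$$(j,i) * P$$(i,k))"
      using P PT that by (intro mult_idx) auto
    also have "\<dots> = (\<Sum>i=0..<n. P$$(i,j) * P$$(i,k))" using P that by (intro sum.cong) auto
    finally show ?thesis using P that by simp
  qed
  have O2: "(\<Sum>j=0..<n. P$$(i,j) * P$$(k,j)) = (if i = k then 1 else 0)" if "i < n" "k < n" for i k
  proof -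
    have "(P * P\<^sup>T) $$ (i,k) = (\<Sum>j=0..<n. P$$(i,j) * P\<^sup>T$$(j,k))"
      using P PT that by (intro mult_idx) auto
    also have "\<dots> = (\<Sum>j=0..<n. P$$(i,j) * P$$(k,j))" using P that by (intro sum.cong) auto
    finally show ?thesis using P that by simp
  qed
  have AF: "A$$(i,k) = (\<Sum>j=0..<n. P$$(i,j) * ls!j * P$$(k,j))" if "i < n" "k < n" for i k
  proof -
    have "A$$(i,k) = (P * D * P\<^sup>T) $$ (i,k)" using AD by simp
    also have "\<dots> = (\<Sum>j=0..<n. (P * D)$$(i,j) * P\<^sup>T$$(j,k))"
      using P PT Dc that by (intro mult_idx) auto
    also have "\<dots> = (\<Sum>j=0..<n. P$$(i,j) * ls!j * P$$(k,j))"
      using P PT that by (intro sum.cong) (auto simp: D_def mult_diagm_idx)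
    finally show ?thesis .
  qed
  show ?thesis using P cp O1 O2 AF by blast
qed



definition qf :: "nat \<Rightarrow> (nat \<Rightarrow> nat \<Rightarrow> real) \<Rightarrow> (nat \<Rightarrow> real) \<Rightarrow> real" where
  "qf n a y = (\<Sum>i=0..<n. \<Sum>k=0..<n. y i * a i k * y k)"

definition nsq :: "nat \<Rightarrow> (nat \<Rightarrow> real) \<Rightarrow> real" where
  "nsq n y = (\<Sum>i=0..<n. y i * y i)"

definition coord :: "nat \<Rightarrow> (nat \<Rightarrow> nat \<Rightarrow> real) \<Rightarrow> (nat \<Rightarrow> real) \<Rightarrow> nat \<Rightarrow> real" where
  "coord n P y j = (\<Sum>i=0..<n. P i j * y i)"

locale spec =
  fixes n :: nat and P a :: "nat \<Rightarrow> nat \<Rightarrow> real" and ls :: "nat \<Rightarrow> real"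
  assumes O1: "\<And>j k. j < n \<Longrightarrow> k < n \<Longrightarrow> (\<Sum>i=0..<n. P i j * P i k) = (if j = k then 1 else 0)"
    and O2: "\<And>i k. i < n \<Longrightarrow> k < n \<Longrightarrow> (\<Sum>j=0..<n. P i j * P k j) = (if i = k then 1 else 0)"
    and AF: "\<And>i k. i < n \<Longrightarrow> k < n \<Longrightarrow> a i k = (\<Sum>j=0..<n. P i j * ls j * P k j)"
begin

lemma qf_coord: "qf n a y = (\<Sum>j=0..<n. ls j * (coord n P y j)^2)"
proof -
  have "qf n a y = (\<Sum>i=0..<n. \<Sum>k=0..<n. \<Sum>j=0..<n. ls j * (P i j * y i) * (P k j * y k))"
    unfolding qf_def
    by (intro sum.cong refl) (simp add: AF sum_distrib_left sum_distrib_right mult_ac)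
  also have "\<dots> = (\<Sum>i=0..<n. \<Sum>j=0..<n. \<Sum>k=0..<n. ls j * (P i j * y i) * (P k j * y k))"
    by (intro sum.cong refl sum.swap)
  also have "\<dots> = (\<Sum>j=0..<n. \<Sum>i=0..<n. \<Sum>k=0..<n. ls j * (P i j * y i) * (P k j * y k))"
    by (rule sum.swap)
  also have "\<dots> = (\<Sum>j=0..<n. ls j * (coord n P y j)^2)"
    unfolding coord_def power2_eq_square sum_product
    by (intro sum.cong refl) (simp add: sum_distrib_left mult_ac)
  finally show ?thesis .
qed

lemma nsq_coord: "nsq n y = (\<Sum>j=0..<n. (coord n P y j)^2)"
proof -
  have "(\<Sum>j=0..<n. (coord n P y j)^2) = (\<Sum>j=0..<n. \<Sum>i=0..<n. \<Sum>k=0..<n. (P i j * y i) * (P k j * y k))"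
    unfolding coord_def power2_eq_square sum_product by simp
  also have "\<dots> = (\<Sum>i=0..<n. \<Sum>j=0..<n. \<Sum>k=0..<n. (P i j * y i) * (P k j * y k))"
    by (rule sum.swap)
  also have "\<dots> = (\<Sum>i=0..<n. \<Sum>k=0..<n. \<Sum>j=0..<n. (P i j * y i) * (P k j * y k))"
    by (intro sum.cong refl sum.swap)
  also have "\<dots> = (\<Sum>i=0..<n. \<Sum>k=0..<n. y i * y k * (\<Sum>j=0..<n. P i j * P k j))"
    by (intro sum.cong refl) (simp add: sum_distrib_left mult_ac)
  also have "\<dots> = (\<Sum>i=0..<n. \<Sum>k=0..<n. if k = i then y i * y i else 0)"
    by (intro sum.cong refl) (auto simp: O2)
  also have "\<dots> = nsq n y" unfolding nsq_def by (intro sum.cong refl) (simp add: sum.delta)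
  finally show ?thesis by simp
qed

lemma coord_eig:
  assumes "j < n"
  shows "coord n P (\<lambda>i. P i j) k = (if k < n then (if j = k then 1 else 0) else coord n P (\<lambda>i. P i j) k)"
  using O1[of k j] assms by (auto simp: coord_def mult.commute)

lemma coord_lin: "coord n P (\<lambda>i. al * x i + be * w i) k = al * coord n P x k + be * coord n P w k"
  unfolding coord_def by (simp add: sum.distrib sum_distrib_left algebra_simps)


lemma orth_combo:
  assumes "finite J" "card J \<le> 1"
  shows "\<exists>al be. (al, be) \<noteq> (0,0) \<and> (\<forall>j\<in>J. coord n P (\<lambda>i. al * u i + be * x i) j = 0)"
proof (cases "J = {}")
  case True thus ?thesis by (intro exI[of _ 1] exI[of _ 0]) auto
next
  case False
  then obtain j0 where j0: "j0 \<in> J" by auto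
  have J: "J = {j0}"
  proof -
    have "\<forall>a\<in>J. \<forall>b\<in>J. a = b" using assms card_le_Suc0_iff_eq[of J] by simp
    thus ?thesis using j0 by blast
  qed
  define p where "p = coord n P u j0"
  define q where "q = coord n P x j0"
  show ?thesis
  proof (cases "p = 0 \<and> q = 0")
    case True
    have "(1::real, 0::real) \<noteq> (0,0)" by simp
    moreover have "\<forall>j\<in>J. coord n P (\<lambda>i. 1 * u i + 0 * x i) j = 0"
      using J True by (simp add: coord_lin p_def q_def)
    ultimately show ?thesis by blast
  next
    case False
    have "(q, -p) \<noteq> (0,0)" using False by auto
    moreover have "\<forall>j\<in>J. coord n P (\<lambda>i. q * u i + (-p) * x i) j = 0"
    proof -
      have "coord n P (\<lambda>i. q * u i + (-p) * x i) j0 = q * coord n P u j0 + (-p) * coord n P x j0"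
        by (rule coord_lin)
      also have "\<dots> = 0" by (simp add: p_def q_def)
      finally show ?thesis using J by simp
    qed
    ultimately show ?thesis by blast
  qed
qed

lemma count_lt_ge2:
  assumes H: "\<And>al be. (al, be) \<noteq> (0,0) \<Longrightarrow>
     qf n a (\<lambda>i. al * u i + be * x i) < c * nsq n (\<lambda>i. al * u i + be * x i)"
  shows "2 \<le> card {j\<in>{0..<n}. ls j < c}"
proof (rule ccontr)
  define J where "J = {j\<in>{0..<n}. ls j < c}"
  assume "\<not> 2 \<le> card {j\<in>{0..<n}. ls j < c}"
  hence "card J \<le> 1" unfolding J_def by simp
  then obtain al be where ab: "(al, be) \<noteq> (0,0)" and z: "\<forall>j\<in>J. coord n P (\<lambda>i. al * u i + be * x i) j = 0"
    using orth_combo[of J u x] unfolding J_def by auto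
  define y where "y = (\<lambda>i. al * u i + be * x i)"
  have "qf n a y - c * nsq n y = (\<Sum>j=0..<n. (ls j - c) * (coord n P y j)^2)"
    unfolding qf_coord nsq_coord by (simp add: sum_distrib_left sum_subtractf algebra_simps)
  also have "\<dots> \<ge> 0"
  proof (intro sum_nonneg)
    fix j assume "j \<in> {0..<n}"
    thus "(ls j - c) * (coord n P y j)^2 \<ge> 0" using z unfolding J_def y_def
      by (cases "ls j < c") auto
  qed
  finally show False using H[OF ab] unfolding y_def by simp
qed

lemma count_le_ge2:
  assumes H: "\<And>al be. (al, be) \<noteq> (0,0) \<Longrightarrow> nsq n (\<lambda>i. al * u i + be * x i) > 0 \<and>
     qf n a (\<lambda>i. al * u i + be * x i) \<le> c * nsq n (\<lambda>i. al * u i + be * x i)"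
  shows "2 \<le> card {j\<in>{0..<n}. ls j \<le> c}"
proof (rule ccontr)
  define J where "J = {j\<in>{0..<n}. ls j \<le> c}"
  assume "\<not> 2 \<le> card {j\<in>{0..<n}. ls j \<le> c}"
  hence "card J \<le> 1" unfolding J_def by simp
  then obtain al be where ab: "(al, be) \<noteq> (0,0)" and z: "\<forall>j\<in>J. coord n P (\<lambda>i. al * u i + be * x i) j = 0"
    using orth_combo[of J u x] unfolding J_def by auto
  define y where "y = (\<lambda>i. al * u i + be * x i)"
  have "nsq n y > 0" using H[OF ab] unfolding y_def by simp
  hence "(\<Sum>j=0..<n. (coord n P y j)^2) > 0" unfolding nsq_coord .
  have "\<exists>j0\<in>{0..<n}. coord n P y j0 \<noteq> 0"
  proof (rule ccontr)
    assume "\<not> (\<exists>j0\<in>{0..<n}. coord n P y j0 \<noteq> 0)"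
    hence "\<forall>j\<in>{0..<n}. coord n P y j = 0" by blast
    hence "(\<Sum>j=0..<n. (coord n P y j)^2) = 0" by simp
    thus False using \<open>(\<Sum>j=0..<n. (coord n P y j)^2) > 0\<close> by simp
  qed
  then obtain j0 where j0: "j0 \<in> {0..<n}" "coord n P y j0 \<noteq> 0" by blast
  have j0J: "j0 \<notin> J" using z j0 unfolding y_def by auto
  have "qf n a y - c * nsq n y = (\<Sum>j=0..<n. (ls j - c) * (coord n P y j)^2)"
    unfolding qf_coord nsq_coord by (simp add: sum_distrib_left sum_subtractf algebra_simps)
  also have "\<dots> > 0"
  proof (rule sum_pos2[OF _ j0(1)])
    show "finite {0..<n}" by simp
    show "(ls j0 - c) * (coord n P y j0)^2 > 0" using j0 j0J unfolding J_def by auto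
    fix j assume "j \<in> {0..<n}"
    thus "(ls j - c) * (coord n P y j)^2 \<ge> 0" using z unfolding J_def y_def
      by (cases "ls j \<le> c") auto
  qed
  finally show False using H[OF ab] unfolding y_def by simp
qed

lemma count_lt_le1:
  assumes H: "\<And>y. (\<Sum>i=0..<n. u i * y i) = 0 \<Longrightarrow> qf n a y \<ge> c * nsq n y"
  shows "card {j\<in>{0..<n}. ls j < c} \<le> 1"
proof (rule ccontr)
  assume "\<not> card {j\<in>{0..<n}. ls j < c} \<le> 1"
  then obtain j1 j2 where j: "j1 \<in> {j\<in>{0..<n}. ls j < c}" "j2 \<in> {j\<in>{0..<n}. ls j < c}" "j1 \<noteq> j2"
  proof -
    have "finite {j\<in>{0..<n}. ls j < c}" by simp
    hence "\<not> (\<forall>a\<in>{j\<in>{0..<n}. ls j < c}. \<forall>b\<in>{j\<in>{0..<n}. ls j < c}. a = b)"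
      using card_le_Suc0_iff_eq[of "{j\<in>{0..<n}. ls j < c}"] \<open>\<not> card {j\<in>{0..<n}. ls j < c} \<le> 1\<close> by simp
    thus ?thesis using that by blast
  qed
  define p where "p = (\<Sum>i=0..<n. u i * P i j1)"
  define q where "q = (\<Sum>i=0..<n. u i * P i j2)"
  have "\<exists>al be. (al, be) \<noteq> (0::real,0::real) \<and> al * p + be * q = 0"
  proof (cases "p = 0 \<and> q = 0")
    case True
    hence "(1::real, 0::real) \<noteq> (0,0) \<and> 1 * p + 0 * q = 0" by simp
    thus ?thesis by blast
  next
    case False
    hence "(q, -p) \<noteq> (0,0) \<and> q * p + (-p) * q = 0" by (auto simp: algebra_simps)
    thus ?thesis by blast
  qed
  then obtain al be where ab: "(al, be) \<noteq> (0,0)" and pq: "al * p + be * q = 0" by blast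
  define y where "y = (\<lambda>i. al * P i j1 + be * P i j2)"
  have "(\<Sum>i=0..<n. u i * y i) = al * p + be * q"
    unfolding y_def p_def q_def by (simp add: sum.distrib sum_distrib_left algebra_simps)
  hence ge: "qf n a y \<ge> c * nsq n y" using pq H by simp
  have j1n: "j1 < n" and j2n: "j2 < n" and l1: "ls j1 < c" and l2: "ls j2 < c" and j12: "j1 \<noteq> j2"
    using j by auto
  have cy: "coord n P y k = al * (if j1 = k then 1 else 0) + be * (if j2 = k then 1 else 0)" if "k < n" for k
  proof -
    have "coord n P y k = al * coord n P (\<lambda>i. P i j1) k + be * coord n P (\<lambda>i. P i j2) k"
      unfolding y_def by (rule coord_lin)
    also have "coord n P (\<lambda>i. P i j1) k = (if j1 = k then 1 else 0)"
      using coord_eig[OF j1n, of k] that by simp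
    also have "coord n P (\<lambda>i. P i j2) k = (if j2 = k then 1 else 0)"
      using coord_eig[OF j2n, of k] that by simp
    finally show ?thesis .
  qed
  have sq: "(coord n P y k)^2 = (if k = j1 then al^2 else 0) + (if k = j2 then be^2 else 0)" if "k < n" for k
  proof (cases "k = j1")
    case True thus ?thesis using cy[OF that] j12 by simp
  next
    case False thus ?thesis using cy[OF that] j12 by (cases "k = j2") simp_all
  qed
  have "qf n a y = (\<Sum>k=0..<n. (if k = j1 then ls j1 * al^2 else 0) + (if k = j2 then ls j2 * be^2 else 0))"
    unfolding qf_coord using j12 by (intro sum.cong refl) (simp add: sq distrib_left)
  also have "\<dots> = ls j1 * al^2 + ls j2 * be^2" using j1n j2n j12 by (simp add: sum.distrib)
  finally have qfy: "qf n a y = ls j1 * al^2 + ls j2 * be^2" .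
  have "nsq n y = (\<Sum>k=0..<n. (if k = j1 then al^2 else 0) + (if k = j2 then be^2 else 0))"
    unfolding nsq_coord by (intro sum.cong refl) (simp add: sq)
  also have "\<dots> = al^2 + be^2" using j1n j2n j12 by (simp add: sum.distrib)
  finally have nsqy: "nsq n y = al^2 + be^2" .
  have a1: "ls j1 * al^2 \<le> c * al^2" using l1 by (intro mult_right_mono) auto
  have a2: "ls j2 * be^2 \<le> c * be^2" using l2 by (intro mult_right_mono) auto
  have "al \<noteq> 0 \<or> be \<noteq> 0" using ab by auto
  hence "ls j1 * al^2 < c * al^2 \<or> ls j2 * be^2 < c * be^2"
  proof
    assume "al \<noteq> 0" thus ?thesis using l1 by (intro disjI1 mult_strict_right_mono) auto
  next
    assume "be \<noteq> 0" thus ?thesis using l2 by (intro disjI2 mult_strict_right_mono) auto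
  qed
  hence "qf n a y < c * nsq n y" unfolding qfy nsqy using a1 a2 by (auto simp: algebra_simps)
  thus False using ge by simp
qed
end



lemma order_prod_lin: "order a (\<Prod>l\<leftarrow>ls. [:-l,1:]) = count_list ls (a::real)"
proof (induction ls)
  case Nil thus ?case by (simp add: order_0I)
next
  case (Cons l ls)
  have nz: "(\<Prod>l\<leftarrow>ls. [:-l,1::real:]) \<noteq> 0" by (auto simp: prod_list_zero_iff)
  have e: "(\<Prod>l\<leftarrow>l#ls. [:-l,1:]) = [:-l,1:] * (\<Prod>l\<leftarrow>ls. [:-l,1::real:])" by simp
  have "[:-l,1:] * (\<Prod>l\<leftarrow>ls. [:-l,1::real:]) \<noteq> 0" by (rule no_zero_divisors) (use nz in simp_all)
  hence "order a (\<Prod>l\<leftarrow>l#ls. [:-l,1:]) = order a [:-l,1:] + order a (\<Prod>l\<leftarrow>ls. [:-l,1:])"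
    unfolding e by (rule order_mult)
  thus ?case using Cons by (simp add: order_linear')
qed

lemma count_filter_same: "P nu \<Longrightarrow> count_list (filter P xs) nu = count_list xs nu"
  by (induction xs) auto

context
  fixes A :: "real mat" and n :: nat and ls :: "real list"
  assumes A: "A \<in> carrier_mat n n" and cp: "char_poly A = (\<Prod>l\<leftarrow>ls. [:-l,1:])" and len: "length ls = n"
begin

lemma sse_eig: "eigenvalue A mu \<longleftrightarrow> mu \<in> set ls"
  unfolding eigenvalue_root_char_poly[OF A] cp
  by (auto simp: poly_prod_list prod_list_zero_iff image_iff)

lemma sse_cnt: "(\<Sum>nu\<in>{nu. eigenvalue A nu \<and> nu \<le> mu}. order nu (char_poly A)) = card {j\<in>{0..<n}. ls!j \<le> mu}"
proof -
  define X where "X = {nu. nu \<in> set ls \<and> nu \<le> mu}"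
  have X: "{nu. eigenvalue A nu \<and> nu \<le> mu} = X" unfolding X_def by (simp add: sse_eig)
  have fX: "finite X" unfolding X_def by simp
  have "(\<Sum>nu\<in>X. order nu (char_poly A)) = (\<Sum>nu\<in>X. count_list (filter (\<lambda>l. l \<le> mu) ls) nu)"
    unfolding cp order_prod_lin by (intro sum.cong refl) (auto simp: X_def count_filter_same)
  also have "\<dots> = length (filter (\<lambda>l. l \<le> mu) ls)"
    by (rule sum_count_set) (auto simp: X_def fX)
  also have "\<dots> = card {j\<in>{0..<n}. ls!j \<le> mu}" unfolding length_filter_conv_card len
    by (rule arg_cong[where f=card]) auto
  finally show ?thesis unfolding X .
qed

lemma sse_def': "second_smallest_eigenvalue A = (LEAST mu. mu \<in> set ls \<and> 2 \<le> card {j\<in>{0..<n}. ls!j \<le> mu})"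
  unfolding second_smallest_eigenvalue_def sse_cnt unfolding sse_eig by (rule refl)

lemma least_fin:
  fixes Q :: "real \<Rightarrow> bool"
  assumes "finite {x. Q x}" "Q x0"
  shows "(LEAST x. Q x) \<le> x0" "Q (LEAST x. Q x)"
proof -
  define m where "m = Min {x. Q x}"
  have ne: "{x. Q x} \<noteq> {}" using assms by auto
  have Qm: "Q m" using Min_in[OF assms(1) ne] by (simp add: m_def)
  have "(LEAST x. Q x) = m"
    by (rule Least_equality) (use Qm assms in \<open>auto simp: m_def\<close>)
  thus "(LEAST x. Q x) \<le> x0" "Q (LEAST x. Q x)" using Qm assms by (auto simp: m_def)
qed

lemma sse_lt:
  assumes "2 \<le> card {j\<in>{0..<n}. ls!j < c}"
  shows "second_smallest_eigenvalue A < c"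
proof -
  define T where "T = {l. l \<in> set ls \<and> l < c}"
  have "{j\<in>{0..<n}. ls!j < c} \<noteq> {}"
  proof
    assume "{j\<in>{0..<n}. ls!j < c} = {}"
    hence "card {j\<in>{0..<n}. ls!j < c} = 0" by (simp only: card.empty)
    with assms show False by linarith
  qed
  then obtain j where j: "j \<in> {j\<in>{0..<n}. ls!j < c}" by blast
  have jT: "ls!j \<in> T" using j len by (auto simp: T_def intro!: nth_mem)
  have Tne: "T \<noteq> {}" using jT by blast
  have fT: "finite T" unfolding T_def by simp
  define mu0 where "mu0 = Max T"
  have mu0T: "mu0 \<in> T" using Max_in[OF fT Tne] by (simp add: mu0_def)
  have sub: "{j\<in>{0..<n}. ls!j < c} \<subseteq> {j\<in>{0..<n}. ls!j \<le> mu0}"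
  proof
    fix i assume "i \<in> {j\<in>{0..<n}. ls!j < c}"
    hence "ls!i \<in> T" using len unfolding T_def by auto
    hence "ls!i \<le> mu0" unfolding mu0_def by (rule Max_ge[OF fT])
    thus "i \<in> {j\<in>{0..<n}. ls!j \<le> mu0}" using \<open>i \<in> {j\<in>{0..<n}. ls!j < c}\<close> by simp
  qed
  have "2 \<le> card {j\<in>{0..<n}. ls!j \<le> mu0}"
  proof -
    have "card {j\<in>{0..<n}. ls!j < c} \<le> card {j\<in>{0..<n}. ls!j \<le> mu0}" by (rule card_mono[OF _ sub]) simp
    thus ?thesis using assms by linarith
  qed
  hence Q0: "mu0 \<in> set ls \<and> 2 \<le> card {j\<in>{0..<n}. ls!j \<le> mu0}" using mu0T unfolding T_def by auto
  have fin: "finite {mu. mu \<in> set ls \<and> 2 \<le> card {j\<in>{0..<n}. ls!j \<le> mu}}" by simp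
  have "second_smallest_eigenvalue A \<le> mu0"
    unfolding sse_def' by (rule least_fin(1)[OF fin Q0])
  also have "mu0 < c" using mu0T unfolding T_def by simp
  finally show ?thesis .
qed

lemma sse_eq:
  assumes le: "2 \<le> card {j\<in>{0..<n}. ls!j \<le> c}" and lt: "card {j\<in>{0..<n}. ls!j < c} \<le> 1"
  shows "second_smallest_eigenvalue A = c"
  unfolding sse_def'
proof (rule Least_equality)
  have "{j\<in>{0..<n}. ls!j \<le> c} \<noteq> {j\<in>{0..<n}. ls!j < c}"
  proof
    assume "{j\<in>{0..<n}. ls!j \<le> c} = {j\<in>{0..<n}. ls!j < c}"
    hence "card {j\<in>{0..<n}. ls!j \<le> c} = card {j\<in>{0..<n}. ls!j < c}" by (rule arg_cong)
    thus False using le lt by linarith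
  qed
  moreover have "{j\<in>{0..<n}. ls!j < c} \<subseteq> {j\<in>{0..<n}. ls!j \<le> c}" by auto
  ultimately obtain j where "j \<in> {j\<in>{0..<n}. ls!j \<le> c}" "j \<notin> {j\<in>{0..<n}. ls!j < c}" by blast
  hence "j < n" "ls!j = c" by auto
  hence "c \<in> set ls" using len by auto
  thus "c \<in> set ls \<and> 2 \<le> card {j\<in>{0..<n}. ls!j \<le> c}" using le by simp
next
  fix y assume y: "y \<in> set ls \<and> 2 \<le> card {j\<in>{0..<n}. ls!j \<le> y}"
  show "c \<le> y"
  proof (rule ccontr)
    assume "\<not> c \<le> y"
    hence "{j\<in>{0..<n}. ls!j \<le> y} \<subseteq> {j\<in>{0..<n}. ls!j < c}" by auto
    hence "card {j\<in>{0..<n}. ls!j \<le> y} \<le> card {j\<in>{0..<n}. ls!j < c}" by (intro card_mono) auto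
    thus False using y lt by simp
  qed
qed

end



lemma sg_sym: "simple_graph n E \<Longrightarrow> E i j \<Longrightarrow> E j i"
  unfolding simple_graph_def by blast
lemma sg_irr: "simple_graph n E \<Longrightarrow> \<not> E i i"
  unfolding simple_graph_def by blast
lemma sg_lt: "simple_graph n E \<Longrightarrow> E i j \<Longrightarrow> i < n \<and> j < n"
  unfolding simple_graph_def by blast

lemma rel_step: "a \<in> W \<Longrightarrow> b \<in> W \<Longrightarrow> E a b \<Longrightarrow> (a, b) \<in> (induced_rel E W)\<^sup>*"
  unfolding induced_rel_def by auto

lemma universal_in_sep:
  assumes sg: "simple_graph n E" and u: "universal n E x" and S: "minimal_vertex_separator n E S"
  shows "x \<in> S"
proof (rule ccontr)
  assume xS: "x \<notin> S"
  obtain a b where ab: "a \<in> verts n" "b \<in> verts n" "a \<noteq> b" "\<not> E a b" "uv_separator n E S a b"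
    using S unfolding minimal_vertex_separator_def minimal_uv_separator_def by blast
  have x: "x \<in> verts n" using u unfolding universal_def by auto
  have xa: "x \<noteq> a"
  proof
    assume "x = a" thus False using u ab unfolding universal_def by auto
  qed
  have xb: "x \<noteq> b"
  proof
    assume "x = b" hence "E b a" using u ab unfolding universal_def by auto
    thus False using ab sg_sym[OF sg] by blast
  qed
  have Exa: "E a x" using u ab xa sg_sym[OF sg] unfolding universal_def by auto
  have Exb: "E x b" using u ab xb unfolding universal_def by auto
  have W: "a \<in> verts n - S" "b \<in> verts n - S" "x \<in> verts n - S" using ab x xS unfolding uv_separator_def by auto
  have "(a, b) \<in> (induced_rel E (verts n - S))\<^sup>*"
    using rel_step[of a "verts n - S" x E, OF W(1) W(3) Exa] rel_step[of x "verts n - S" b E, OF W(3) W(2) Exb]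
    by (rule rtrancl_trans)
  thus False using ab unfolding uv_separator_def by auto
qed

lemma universal_connects:
  assumes sg: "simple_graph n E" and u: "universal n E x" and x: "x \<notin> T"
  shows "connected_on E (verts n - T)"
  unfolding connected_on_def
proof (intro ballI)
  fix a b assume a: "a \<in> verts n - T" and b: "b \<in> verts n - T"
  have xW: "x \<in> verts n - T" using u x unfolding universal_def by auto
  have ax: "(a, x) \<in> (induced_rel E (verts n - T))\<^sup>*"
  proof (cases "a = x")
    case False thus ?thesis using u a xW sg_sym[OF sg] unfolding universal_def by (auto intro: rel_step)
  qed simp
  have xb: "(x, b) \<in> (induced_rel E (verts n - T))\<^sup>*"
  proof (cases "b = x")
    case False thus ?thesis using u b xW unfolding universal_def by (auto intro: rel_step)
  qed simp
  show "(a, b) \<in> (induced_rel E (verts n - T))\<^sup>*" using ax xb by (rule rtrancl_trans)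
qed

lemma rel_sym:
  assumes sg: "simple_graph n E" and "(a,b) \<in> (induced_rel E W)\<^sup>*"
  shows "(b,a) \<in> (induced_rel E W)\<^sup>*"
proof -
  have "sym (induced_rel E W)" unfolding sym_def induced_rel_def using sg_sym[OF sg] by auto
  thus ?thesis using assms(2) by (meson sym_rtrancl symD)
qed

lemma kappa_char:
  assumes S: "S \<subseteq> verts n" "\<not> connected_on E (verts n - S)"
    and min: "\<And>T. T \<subseteq> verts n \<Longrightarrow> \<not> connected_on E (verts n - T) \<Longrightarrow> card S \<le> card T"
  shows "vertex_connectivity n E = card S"
  unfolding vertex_connectivity_def
proof (rule Min_eqI)
  show "finite {card S |S. S \<subseteq> verts n \<and> \<not> connected_on E (verts n - S)}"
  proof (rule finite_subset)
    show "{card S |S. S \<subseteq> verts n \<and> \<not> connected_on E (verts n - S)} \<subseteq> card ` Pow (verts n)" by auto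
  qed (simp add: verts_def)
qed (use S min in auto)

lemma kappa_exists:
  assumes sg: "simple_graph n E" and nc: "\<not> complete_graph n E"
  shows "\<exists>S. S \<subseteq> verts n \<and> \<not> connected_on E (verts n - S) \<and> vertex_connectivity n E = card S
     \<and> (\<forall>T. T \<subseteq> verts n \<and> \<not> connected_on E (verts n - T) \<longrightarrow> card S \<le> card T)"
proof -
  define M where "M = {card S |S. S \<subseteq> verts n \<and> \<not> connected_on E (verts n - S)}"
  have fM: "finite M"
  proof (rule finite_subset)
    show "M \<subseteq> card ` Pow (verts n)" unfolding M_def by auto
  qed (simp add: verts_def)
  obtain i j where ij: "i \<in> verts n" "j \<in> verts n" "i \<noteq> j" "\<not> E i j"
    using nc unfolding complete_graph_def by blast
  define T where "T = verts n - {i, j}"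
  have TV: "T \<subseteq> verts n" by (auto simp: T_def)
  have VT: "verts n - T = {i, j}" using ij by (auto simp: T_def)
  have "\<not> connected_on E (verts n - T)"
  proof
    assume c: "connected_on E (verts n - T)"
    have reach: "z = i" if "(i, z) \<in> (induced_rel E {i,j})\<^sup>*" for z
      using that
    proof (induction rule: rtrancl_induct)
      case (step y z)
      hence "E i z" "z \<in> {i,j}" using step by (auto simp: induced_rel_def)
      thus ?case using ij sg_irr[OF sg] by auto
    qed simp
    have "(i, j) \<in> (induced_rel E {i,j})\<^sup>*" using c VT unfolding connected_on_def by auto
    thus False using reach ij by auto
  qed
  hence "card T \<in> M" using TV unfolding M_def by auto
  hence Mne: "M \<noteq> {}" by auto
  have "Min M \<in> M" using Min_in[OF fM Mne] .
  then obtain S where S: "S \<subseteq> verts n" "\<not> connected_on E (verts n - S)" "card S = Min M"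
    unfolding M_def by auto
  have "\<forall>T. T \<subseteq> verts n \<and> \<not> connected_on E (verts n - T) \<longrightarrow> card S \<le> card T"
    using S(3) Min_le[OF fM] unfolding M_def by auto
  moreover have "vertex_connectivity n E = card S" using S(3) unfolding vertex_connectivity_def M_def by simp
  ultimately show ?thesis using S by blast
qed



definition ef :: "nat \<Rightarrow> (nat \<Rightarrow> nat \<Rightarrow> bool) \<Rightarrow> (nat \<Rightarrow> real) \<Rightarrow> real" where
  "ef n E y = (\<Sum>i=0..<n. \<Sum>k=0..<n. if E i k then (y i - y k)^2 else 0)"

lemma lap_carrier: "laplacian n E \<in> carrier_mat n n"
  by (simp add: laplacian_def)

lemma lap_idx: "i < n \<Longrightarrow> k < n \<Longrightarrow> laplacian n E $$ (i,k) =
   (if i = k then real (card {k. k < n \<and> E i k}) else 0) - (if E i k then 1 else 0)"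
  by (simp add: laplacian_def)

lemma lap_sym: "simple_graph n E \<Longrightarrow> (laplacian n E)\<^sup>T = laplacian n E"
  by (rule eq_matI) (auto simp: laplacian_def dest: sg_sym)

lemma deg_sum: fixes E :: "nat \<Rightarrow> nat \<Rightarrow> bool" shows "real (card {k. k < n \<and> E i k}) = (\<Sum>k=0..<n. if E i k then 1 else 0)"
proof -
  have "{k. k < n \<and> E i k} = {k\<in>{0..<n}. E i k}" by auto
  hence "real (card {k. k < n \<and> E i k}) = (\<Sum>k\<in>{k\<in>{0..<n}. E i k}. 1)" by simp
  also have "\<dots> = (\<Sum>k=0..<n. if E i k then 1 else 0)" by (rule sum.inter_filter) simp
  finally show ?thesis .
qed

lemma sum_swap_sym:
  assumes sg: "simple_graph n E"
  shows "(\<Sum>i=0..<n. \<Sum>k=0..<n. if E i k then f k i else (0::real)) = (\<Sum>i=0..<n. \<Sum>k=0..<n. if E i k then f i k else 0)"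
proof -
  have "(\<Sum>i=0..<n. \<Sum>k=0..<n. if E i k then f k i else (0::real)) = (\<Sum>k=0..<n. \<Sum>i=0..<n. if E i k then f k i else 0)"
    by (rule sum.swap)
  also have "\<dots> = (\<Sum>k=0..<n. \<Sum>i=0..<n. if E k i then f k i else 0)"
  proof -
    have "E a b = E b a" for a b using sg_sym[OF sg] by blast
    thus ?thesis by simp
  qed
  finally show ?thesis .
qed

lemma qf_lap:
  assumes sg: "simple_graph n E"
  shows "qf n (\<lambda>i k. laplacian n E $$ (i,k)) y = ef n E y / 2"
proof -
  define D where "D = (\<Sum>i=0..<n. \<Sum>k=0..<n. if E i k then y i * y i else 0)"
  define X where "X = (\<Sum>i=0..<n. \<Sum>k=0..<n. if E i k then y i * y k else 0)"
  have "qf n (\<lambda>i k. laplacian n E $$ (i,k)) y =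
      (\<Sum>i=0..<n. \<Sum>k=0..<n. (if i = k then y i * y i * real (card {k. k < n \<and> E i k}) else 0)
         - (if E i k then y i * y k else 0))"
    unfolding qf_def by (intro sum.cong refl) (auto simp: lap_idx sg_irr[OF sg] algebra_simps)
  also have "\<dots> = (\<Sum>i=0..<n. y i * y i * real (card {k. k < n \<and> E i k})) - X"
    unfolding X_def by (simp add: sum_subtractf)
  also have "(\<Sum>i=0..<n. y i * y i * real (card {k. k < n \<and> E i k})) = D"
    unfolding D_def deg_sum by (simp add: sum_distrib_left if_distrib cong: if_cong)
  finally have q: "qf n (\<lambda>i k. laplacian n E $$ (i,k)) y = D - X" .
  have "ef n E y = (\<Sum>i=0..<n. \<Sum>k=0..<n. (if E i k then y i * y i else 0) + (if E i k then y k * y k else 0)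
       - 2 * (if E i k then y i * y k else 0))"
    unfolding ef_def by (intro sum.cong refl) (auto simp: power2_eq_square algebra_simps)
  also have "\<dots> = D + (\<Sum>i=0..<n. \<Sum>k=0..<n. if E i k then y k * y k else 0) - 2 * X"
    unfolding D_def X_def by (simp add: sum.distrib sum_subtractf sum_distrib_left)
  also have "(\<Sum>i=0..<n. \<Sum>k=0..<n. if E i k then y k * y k else 0) = D"
    unfolding D_def by (rule sum_swap_sym[OF sg, of "\<lambda>a b. y a * y a"])
  finally have "ef n E y = 2 * D - 2 * X" by simp
  thus ?thesis using q by simp
qed

lemma ef_affine: "ef n E (\<lambda>i. al * 1 + be * x i) = be^2 * ef n E x"
  unfolding ef_def by (simp add: sum_distrib_left power2_eq_square algebra_simps if_distrib cong: if_cong)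

lemma nsq_affine: "nsq n (\<lambda>i. al * 1 + be * x i) = al^2 * n + be^2 * nsq n x + 2 * al * be * (\<Sum>i=0..<n. x i)"
  unfolding nsq_def by (simp add: sum.distrib sum_distrib_left power2_eq_square algebra_simps)

lemma ef_test:
  assumes sg: "simple_graph n E" and S: "S \<subseteq> verts n" and x0: "\<And>i. i \<in> S \<Longrightarrow> x i = 0"
    and xc: "\<And>i k. i < n \<Longrightarrow> k < n \<Longrightarrow> i \<notin> S \<Longrightarrow> k \<notin> S \<Longrightarrow> E i k \<Longrightarrow> x i = x k"
  shows "ef n E x = 2 * (\<Sum>i=0..<n. if i \<notin> S then (x i)^2 * real (card {k\<in>S. E i k}) else 0)"
proof -
  define F where "F = (\<Sum>i=0..<n. \<Sum>k=0..<n. if E i k then (if i \<notin> S \<and> k \<in> S then (x i)^2 else 0) else 0)"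
  have "ef n E x = (\<Sum>i=0..<n. \<Sum>k=0..<n. (if E i k then (if i \<notin> S \<and> k \<in> S then (x i)^2 else 0) else 0)
        + (if E i k then (if k \<notin> S \<and> i \<in> S then (x k)^2 else 0) else 0))"
    unfolding ef_def
  proof (intro sum.cong refl)
    fix i k assume i: "i \<in> {0..<n}" and k: "k \<in> {0..<n}"
    show "(if E i k then (x i - x k)\<^sup>2 else 0) = (if E i k then (if i \<notin> S \<and> k \<in> S then (x i)^2 else 0) else 0)
        + (if E i k then (if k \<notin> S \<and> i \<in> S then (x k)^2 else 0) else 0)"
      using i k x0[of i] x0[of k] xc[of i k] by (cases "i \<in> S"; cases "k \<in> S") auto
  qed
  also have "\<dots> = F + (\<Sum>i=0..<n. \<Sum>k=0..<n. if E i k then (if k \<notin> S \<and> i \<in> S then (x k)^2 else 0) else 0)"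
    unfolding F_def by (simp add: sum.distrib)
  also have "(\<Sum>i=0..<n. \<Sum>k=0..<n. if E i k then (if k \<notin> S \<and> i \<in> S then (x k)^2 else 0) else 0) = F"
    unfolding F_def by (rule sum_swap_sym[OF sg, of "\<lambda>a b. if a \<notin> S \<and> b \<in> S then (x a)^2 else 0"])
  also have "F = (\<Sum>i=0..<n. if i \<notin> S then (x i)^2 * real (card {k\<in>S. E i k}) else 0)"
    unfolding F_def
  proof (intro sum.cong refl)
    fix i assume i: "i \<in> {0..<n}"
    have setq: "{k\<in>S. E i k} = {k\<in>{0..<n}. k \<in> S \<and> E i k}" using S by (auto simp: verts_def)
    have "real (card {k\<in>S. E i k}) = (\<Sum>k\<in>{k\<in>{0..<n}. k \<in> S \<and> E i k}. 1)" unfolding setq by simp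
    also have "\<dots> = (\<Sum>k=0..<n. if k \<in> S \<and> E i k then 1 else 0)" by (rule sum.inter_filter) simp
    finally have c: "real (card {k\<in>S. E i k}) = (\<Sum>k=0..<n. if k \<in> S \<and> E i k then 1 else 0)" .
    show "(\<Sum>k=0..<n. if E i k then (if i \<notin> S \<and> k \<in> S then (x i)^2 else 0) else 0)
       = (if i \<notin> S then (x i)^2 * real (card {k\<in>S. E i k}) else 0)"
    proof (cases "i \<in> S")
      case True thus ?thesis by (intro trans[OF sum.neutral]) auto
    next
      case False thus ?thesis unfolding c by (auto simp: sum_distrib_left intro!: sum.cong)
    qed
  qed
  finally show ?thesis by simp
qed

lemma sumsq_diff:
  fixes y :: "nat \<Rightarrow> real"
  assumes "finite A"
  shows "(\<Sum>i\<in>A. \<Sum>k\<in>A. (y i - y k)^2) = 2 * card A * (\<Sum>i\<in>A. y i * y i) - 2 * (\<Sum>i\<in>A. y i)^2"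
proof -
  have "(\<Sum>i\<in>A. \<Sum>k\<in>A. (y i - y k)^2) = (\<Sum>i\<in>A. \<Sum>k\<in>A. y i * y i + y k * y k - 2 * (y i * y k))"
    by (intro sum.cong refl) (simp add: power2_eq_square algebra_simps)
  also have "\<dots> = 2 * card A * (\<Sum>i\<in>A. y i * y i) - 2 * (\<Sum>i\<in>A. y i) * (\<Sum>k\<in>A. y k)"
    by (simp add: sum.distrib sum_subtractf sum_distrib_left sum_distrib_right sum.swap[of "\<lambda>i k. y k * y k"] algebra_simps)
  finally show ?thesis by (simp add: power2_eq_square)
qed



lemma ef_lower:
  assumes sg: "simple_graph n E" and U: "U \<subseteq> verts n" and univ: "\<And>u. u \<in> U \<Longrightarrow> universal n E u"
    and sum0: "(\<Sum>i=0..<n. y i) = 0"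
  shows "ef n E y \<ge> 2 * real (card U) * nsq n y"
proof -
  define I where "I = {0..<n}"
  define W where "W = I - U"
  have UI: "U \<subseteq> I" using U by (simp add: I_def verts_def)
  have fI: "finite I" by (simp add: I_def)
  have WI: "W \<subseteq> I" by (auto simp: W_def)
  have pw: "(if E i k then (y i - y k)^2 else 0) \<ge> (y i - y k)^2 - (if i \<in> W then (if k \<in> W then (y i - y k)^2 else 0) else 0)"
    if i: "i \<in> I" and k: "k \<in> I" for i k
  proof (cases "i \<in> W \<and> k \<in> W")
    case True thus ?thesis by auto
  next
    case False
    hence iku: "i \<in> U \<or> k \<in> U" using i k by (auto simp: W_def)
    show ?thesis
    proof (cases "i = k")
      case True thus ?thesis by auto
    next
      case ne: False
      have "E i k"
      proof (cases "i \<in> U")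
        case True thus ?thesis using univ[of i] k ne by (auto simp: universal_def I_def verts_def)
      next
        case False
        hence "k \<in> U" using iku by simp
        hence "E k i" using univ[of k] i ne by (auto simp: universal_def I_def verts_def)
        thus ?thesis using sg_sym[OF sg] by blast
      qed
      thus ?thesis using False by auto
    qed
  qed
  have s1: "(\<Sum>i\<in>I. \<Sum>k\<in>I. (y i - y k)^2 - (if i \<in> W then (if k \<in> W then (y i - y k)^2 else 0) else 0)) \<le> ef n E y"
    unfolding ef_def I_def[symmetric] by (intro sum_mono) (use pw in auto)
  have s2: "(\<Sum>i\<in>I. \<Sum>k\<in>I. (y i - y k)^2 - (if i \<in> W then (if k \<in> W then (y i - y k)^2 else 0) else 0))
     = (\<Sum>i\<in>I. \<Sum>k\<in>I. (y i - y k)^2) - (\<Sum>i\<in>W. \<Sum>k\<in>W. (y i - y k)^2)"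
  proof -
    have "(\<Sum>i\<in>I. \<Sum>k\<in>I. (if i \<in> W then (if k \<in> W then (y i - y k)^2 else 0) else 0))
        = (\<Sum>i\<in>I. if i \<in> W then (\<Sum>k\<in>I. if k \<in> W then (y i - y k)^2 else 0) else 0)"
      by (intro sum.cong refl) auto
    also have "\<dots> = (\<Sum>i\<in>I. if i \<in> W then (\<Sum>k\<in>W. (y i - y k)^2) else 0)"
      using sum.inter_restrict[OF fI, of "\<lambda>k. (y _ - y k)^2" W] WI
      by (intro sum.cong refl) (simp add: sum.inter_restrict[OF fI, symmetric] Int_absorb1)
    also have "\<dots> = (\<Sum>i\<in>W. \<Sum>k\<in>W. (y i - y k)^2)"
      using WI by (simp add: sum.inter_restrict[OF fI, symmetric] Int_absorb1)
    finally show ?thesis by (simp add: sum_subtractf)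
  qed
  have s3: "(\<Sum>i\<in>I. \<Sum>k\<in>I. (y i - y k)^2) = 2 * card I * nsq n y"
    using sumsq_diff[OF fI, of y] sum0 by (simp add: I_def nsq_def)
  have s4: "(\<Sum>i\<in>W. \<Sum>k\<in>W. (y i - y k)^2) \<le> 2 * card W * nsq n y"
  proof -
    have fW: "finite W" using WI fI finite_subset by blast
    have "(\<Sum>i\<in>W. \<Sum>k\<in>W. (y i - y k)^2) \<le> 2 * card W * (\<Sum>i\<in>W. y i * y i)"
      using sumsq_diff[OF fW, of y] by simp
    also have "(\<Sum>i\<in>W. y i * y i) \<le> nsq n y"
      unfolding nsq_def I_def[symmetric] by (rule sum_mono2[OF fI WI]) auto
    finally show ?thesis by (simp add: mult_left_mono)
  qed
  have "ef n E y \<ge> 2 * card I * nsq n y - 2 * card W * nsq n y" using s1 s2 s3 s4 by linarith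
  moreover have "card W = card I - card U" unfolding W_def by (rule card_Diff_subset[OF finite_subset[OF UI fI] UI])
  moreover have "card U \<le> card I" by (rule card_mono[OF fI UI])
  ultimately show ?thesis by (simp add: of_nat_diff algebra_simps)
qed



lemma test_vector:
  assumes sg: "simple_graph n E" and S: "S \<subseteq> verts n" and nc: "\<not> connected_on E (verts n - S)"
  shows "\<exists>x. (\<forall>i\<in>S. x i = 0) \<and> (\<forall>i k. i < n \<longrightarrow> k < n \<longrightarrow> i \<notin> S \<longrightarrow> k \<notin> S \<longrightarrow> E i k \<longrightarrow> x i = x k)
    \<and> (\<Sum>i=0..<n. x i) = 0 \<and> (\<forall>i<n. i \<notin> S \<longrightarrow> x i \<noteq> 0) \<and> nsq n x > 0"
proof -
  define W where "W = verts n - S"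
  define R where "R = induced_rel E W"
  obtain u v where uv: "u \<in> W" "v \<in> W" "(u, v) \<notin> R\<^sup>*"
    using nc unfolding connected_on_def W_def R_def by blast
  define C1 where "C1 = {z \<in> W. (u, z) \<in> R\<^sup>*}"
  define C2 where "C2 = W - C1"
  have fW: "finite W" by (simp add: W_def verts_def)
  have C1W: "C1 \<subseteq> W" and C2W: "C2 \<subseteq> W" by (auto simp: C1_def C2_def)
  have fC1: "finite C1" and fC2: "finite C2" using C1W C2W fW finite_subset by blast+
  have uC1: "u \<in> C1" using uv by (simp add: C1_def)
  have vC2: "v \<in> C2" using uv by (simp add: C1_def C2_def)
  have clos: "i \<in> C1 \<longleftrightarrow> k \<in> C1" if "i \<in> W" "k \<in> W" "E i k" for i k
  proof
    assume "i \<in> C1"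
    hence "(u, i) \<in> R\<^sup>*" by (simp add: C1_def)
    moreover have "(i, k) \<in> R" using that by (simp add: R_def induced_rel_def)
    ultimately show "k \<in> C1" using that by (simp add: C1_def)
  next
    assume "k \<in> C1"
    hence "(u, k) \<in> R\<^sup>*" by (simp add: C1_def)
    moreover have "(k, i) \<in> R" using that sg_sym[OF sg] by (simp add: R_def induced_rel_def)
    ultimately show "i \<in> C1" using that by (simp add: C1_def)
  qed
  define c1 where "c1 = real (card C1)"
  define c2 where "c2 = real (card C2)"
  have c1p: "c1 > 0" using uC1 fC1 by (auto simp: c1_def card_gt_0_iff)
  have c2p: "c2 > 0" using vC2 fC2 by (auto simp: c2_def card_gt_0_iff)
  define x where "x = (\<lambda>i. (if i \<in> C1 then c2 else 0) + (if i \<in> C2 then - c1 else 0))"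
  have WV: "W \<subseteq> {0..<n}" by (auto simp: W_def verts_def)
  have x0: "\<forall>i\<in>S. x i = 0" using C1W C2W by (auto simp: x_def W_def)
  have xc: "\<forall>i k. i < n \<longrightarrow> k < n \<longrightarrow> i \<notin> S \<longrightarrow> k \<notin> S \<longrightarrow> E i k \<longrightarrow> x i = x k"
  proof (intro allI impI)
    fix i k assume "i < n" "k < n" "i \<notin> S" "k \<notin> S" "E i k"
    hence iW: "i \<in> W" and kW: "k \<in> W" by (auto simp: W_def verts_def)
    show "x i = x k" using clos[OF iW kW \<open>E i k\<close>] iW kW by (auto simp: x_def C2_def)
  qed
  have "(\<Sum>i=0..<n. x i) = (\<Sum>i=0..<n. if i \<in> C1 then c2 else 0) + (\<Sum>i=0..<n. if i \<in> C2 then - c1 else 0)"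
    unfolding x_def by (simp add: sum.distrib)
  also have "(\<Sum>i=0..<n. if i \<in> C1 then c2 else 0) = (\<Sum>i\<in>C1. c2)"
    using C1W WV by (simp add: sum.inter_restrict[symmetric] Int_absorb1)
  also have "(\<Sum>i=0..<n. if i \<in> C2 then - c1 else 0) = (\<Sum>i\<in>C2. - c1)"
    using C2W WV by (simp add: sum.inter_restrict[symmetric] Int_absorb1)
  finally have xs: "(\<Sum>i=0..<n. x i) = 0" by (simp add: c1_def c2_def)
  have xnz: "\<forall>i<n. i \<notin> S \<longrightarrow> x i \<noteq> 0"
  proof (intro allI impI)
    fix i assume "i < n" "i \<notin> S"
    hence "i \<in> W" by (simp add: W_def verts_def)
    thus "x i \<noteq> 0" using c1p c2p by (auto simp: x_def C2_def)
  qed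
  have un: "u < n" "u \<notin> S" using uv by (auto simp: W_def verts_def)
  have "nsq n x > 0" unfolding nsq_def
    by (rule sq_sum_pos[of u n x]) (use un xnz in auto)
  thus ?thesis using x0 xc xs xnz by blast
qed

lemma alg_spec:
  assumes sg: "simple_graph n E"
  obtains P ls where "length ls = n" "char_poly (laplacian n E) = (\<Prod>l\<leftarrow>ls. [:-l,1:])"
    "spec n (\<lambda>i j. P$$(i,j)) (\<lambda>i k. laplacian n E $$ (i,k)) (\<lambda>j. ls!j)"
proof -
  obtain P ls where P: "P \<in> carrier_mat n n" "length ls = n" "char_poly (laplacian n E) = (\<Prod>l\<leftarrow>ls. [:-l,1:])"
     "\<forall>j<n. \<forall>k<n. (\<Sum>i=0..<n. P$$(i,j) * P$$(i,k)) = (if j = k then 1 else 0)"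
     "\<forall>i<n. \<forall>k<n. (\<Sum>j=0..<n. P$$(i,j) * P$$(k,j)) = (if i = k then 1 else 0)"
     "\<forall>i<n. \<forall>k<n. laplacian n E $$(i,k) = (\<Sum>j=0..<n. P$$(i,j) * ls!j * P$$(k,j))"
    using spectral[OF lap_carrier lap_sym[OF sg]] by blast
  have "spec n (\<lambda>i j. P$$(i,j)) (\<lambda>i k. laplacian n E $$ (i,k)) (\<lambda>j. ls!j)"
    by unfold_locales (use P in auto)
  thus ?thesis using that P by blast
qed



lemma alg_conn_def': "algebraic_connectivity n E = second_smallest_eigenvalue (laplacian n E)"
  by (simp add: algebraic_connectivity_def)

lemma dir1:
  assumes sg: "simple_graph n E" and conn: "connected_on E (verts n)"
    and S: "S \<subseteq> verts n" "\<not> connected_on E (verts n - S)"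
    and eq: "real (card S) = algebraic_connectivity n E"
  shows "\<forall>w\<in>verts n - S. \<forall>s\<in>S. E w s"
proof (rule ccontr)
  assume "\<not> (\<forall>w\<in>verts n - S. \<forall>s\<in>S. E w s)"
  then obtain w0 s0 where w0: "w0 \<in> verts n - S" and s0: "s0 \<in> S" and nE: "\<not> E w0 s0" by blast
  obtain x where x0: "\<forall>i\<in>S. x i = 0"
    and xc: "\<forall>i k. i < n \<longrightarrow> k < n \<longrightarrow> i \<notin> S \<longrightarrow> k \<notin> S \<longrightarrow> E i k \<longrightarrow> x i = x k"
    and xs: "(\<Sum>i=0..<n. x i) = 0" and xnz: "\<forall>i<n. i \<notin> S \<longrightarrow> x i \<noteq> 0" and xpos: "nsq n x > 0"
    using test_vector[OF sg S(1) S(2)] by blast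
  define k where "k = real (card S)"
  have fS: "finite S" using S finite_subset by (auto simp: verts_def)
  have kpos: "k > 0"
  proof -
    have "S \<noteq> {}" using S conn by auto
    thus ?thesis using fS by (simp add: k_def card_gt_0_iff)
  qed
  have w0n: "w0 < n" "w0 \<notin> S" using w0 by (auto simp: verts_def)
  have npos: "real n > 0" using w0n by simp
  have efx: "ef n E x = 2 * (\<Sum>i=0..<n. if i \<notin> S then (x i)^2 * real (card {k\<in>S. E i k}) else 0)"
    by (rule ef_test[OF sg S(1)]) (use x0 xc in auto)
  have nsqx: "nsq n x = (\<Sum>i=0..<n. if i \<notin> S then (x i)^2 else 0)"
    unfolding nsq_def by (intro sum.cong refl) (use x0 in \<open>auto simp: power2_eq_square\<close>)
  have "(\<Sum>i=0..<n. if i \<notin> S then (x i)^2 * real (card {k\<in>S. E i k}) else 0)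
      < (\<Sum>i=0..<n. if i \<notin> S then (x i)^2 * k else 0)"
  proof (rule sum_strict_mono_ex1)
    show "finite {0..<n}" by simp
    show "\<forall>i\<in>{0..<n}. (if i \<notin> S then (x i)^2 * real (card {k\<in>S. E i k}) else 0) \<le> (if i \<notin> S then (x i)^2 * k else 0)"
    proof
      fix i assume "i \<in> {0..<n}"
      have "card {k\<in>S. E i k} \<le> card S" by (rule card_mono[OF fS]) auto
      thus "(if i \<notin> S then (x i)^2 * real (card {k\<in>S. E i k}) else 0) \<le> (if i \<notin> S then (x i)^2 * k else 0)"
        by (auto simp: k_def intro!: mult_left_mono)
    qed
    have "card {k\<in>S. E w0 k} < card S" by (rule psubset_card_mono[OF fS]) (use s0 nE in auto)
    moreover have "(x w0)^2 > 0" using xnz w0n by simp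
    ultimately have "(x w0)^2 * real (card {k\<in>S. E w0 k}) < (x w0)^2 * k"
      by (simp add: k_def)
    thus "\<exists>i\<in>{0..<n}. (if i \<notin> S then (x i)^2 * real (card {k\<in>S. E i k}) else 0) < (if i \<notin> S then (x i)^2 * k else 0)"
      using w0n by (intro bexI[of _ w0]) auto
  qed
  also have "\<dots> = k * nsq n x" unfolding nsqx by (simp add: sum_distrib_left mult_ac if_distrib cong: if_cong)
  finally have key: "ef n E x / 2 < k * nsq n x" using efx by simp
  obtain P ls where len: "length ls = n" and cp: "char_poly (laplacian n E) = (\<Prod>l\<leftarrow>ls. [:-l,1:])"
    and sp: "spec n (\<lambda>i j. P$$(i,j)) (\<lambda>i k. laplacian n E $$ (i,k)) (\<lambda>j. ls!j)"
    using alg_spec[OF sg] by blast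
  interpret spec n "\<lambda>i j. P$$(i,j)" "\<lambda>i k. laplacian n E $$ (i,k)" "\<lambda>j. ls!j" by (rule sp)
  have "2 \<le> card {j\<in>{0..<n}. ls!j < k}"
  proof (rule count_lt_ge2[of "\<lambda>_. 1" x])
    fix al be :: real assume ab: "(al, be) \<noteq> (0,0)"
    have q: "qf n (\<lambda>i k. laplacian n E $$ (i,k)) (\<lambda>i. al * 1 + be * x i) = be^2 * (ef n E x / 2)"
      unfolding qf_lap[OF sg] ef_affine by simp
    have ns: "nsq n (\<lambda>i. al * 1 + be * x i) = al^2 * n + be^2 * nsq n x"
      unfolding nsq_affine xs by simp
    show "qf n (\<lambda>i k. laplacian n E $$ (i,k)) (\<lambda>i. al * 1 + be * x i) < k * nsq n (\<lambda>i. al * 1 + be * x i)"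
    proof (cases "be = 0")
      case True
      hence "al \<noteq> 0" using ab by auto
      hence "k * (al^2 * n) > 0" using kpos npos by simp
      thus ?thesis unfolding q ns using True by simp
    next
      case False
      hence "be^2 > 0" by simp
      hence "be^2 * (ef n E x / 2) < be^2 * (k * nsq n x)" using key by simp
      moreover have "k * (al^2 * n) \<ge> 0" using kpos by simp
      ultimately show ?thesis unfolding q ns by (simp add: algebra_simps)
    qed
  qed
  hence "second_smallest_eigenvalue (laplacian n E) < k"
    by (rule sse_lt[OF lap_carrier cp len])
  thus False using eq unfolding alg_conn_def' k_def by simp
qed

lemma dir2:
  assumes sg: "simple_graph n E"
    and S0: "minimal_vertex_separator n E S0" and univ: "\<forall>x\<in>S0. universal n E x"
  shows "real (vertex_connectivity n E) = algebraic_connectivity n E"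
proof -
  obtain a b where ab: "a \<in> verts n" "b \<in> verts n" "a \<noteq> b" "\<not> E a b" and sep: "uv_separator n E S0 a b"
    using S0 unfolding minimal_vertex_separator_def minimal_uv_separator_def by blast
  have S0V: "S0 \<subseteq> verts n" using sep unfolding uv_separator_def by auto
  have nc: "\<not> connected_on E (verts n - S0)" using sep unfolding uv_separator_def connected_on_def by auto
  have fS0: "finite S0" using S0V finite_subset by (auto simp: verts_def)
  have kap: "vertex_connectivity n E = card S0"
  proof (rule kappa_char[OF S0V nc])
    fix T assume T: "T \<subseteq> verts n" "\<not> connected_on E (verts n - T)"
    have "S0 \<subseteq> T"
    proof
      fix x assume "x \<in> S0"
      show "x \<in> T"
      proof (rule ccontr)
        assume "x \<notin> T"
        hence "connected_on E (verts n - T)" using universal_connects[OF sg] univ \<open>x \<in> S0\<close> by blast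
        thus False using T by simp
      qed
    qed
    thus "card S0 \<le> card T" using T by (intro card_mono) (auto simp: verts_def intro: finite_subset)
  qed
  define s where "s = real (card S0)"
  obtain x where x0: "\<forall>i\<in>S0. x i = 0"
    and xc: "\<forall>i k. i < n \<longrightarrow> k < n \<longrightarrow> i \<notin> S0 \<longrightarrow> k \<notin> S0 \<longrightarrow> E i k \<longrightarrow> x i = x k"
    and xs: "(\<Sum>i=0..<n. x i) = 0" and xnz: "\<forall>i<n. i \<notin> S0 \<longrightarrow> x i \<noteq> 0" and xpos: "nsq n x > 0"
    using test_vector[OF sg S0V nc] by blast
  have an: "a < n" using ab by (simp add: verts_def)
  have npos: "real n > 0" using an by simp
  have deg: "{k\<in>S0. E i k} = S0" if "i < n" "i \<notin> S0" for i
  proof -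
    have "E i k" if "k \<in> S0" for k
    proof -
      have "k \<noteq> i" using that \<open>i \<notin> S0\<close> by auto
      hence "E k i" using univ \<open>k \<in> S0\<close> \<open>i < n\<close> by (auto simp: universal_def verts_def)
      thus ?thesis using sg_sym[OF sg] by blast
    qed
    thus ?thesis by auto
  qed
  have efx: "ef n E x = 2 * (\<Sum>i=0..<n. if i \<notin> S0 then (x i)^2 * real (card {k\<in>S0. E i k}) else 0)"
    by (rule ef_test[OF sg S0V]) (use x0 xc in auto)
  also have "(\<Sum>i=0..<n. if i \<notin> S0 then (x i)^2 * real (card {k\<in>S0. E i k}) else 0)
      = (\<Sum>i=0..<n. if i \<notin> S0 then (x i)^2 * s else 0)"
    by (intro sum.cong refl) (auto simp: deg s_def)
  also have "\<dots> = s * nsq n x" unfolding nsq_def sum_distrib_left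
    by (intro sum.cong refl) (use x0 in \<open>auto simp: power2_eq_square\<close>)
  finally have efx: "ef n E x = 2 * (s * nsq n x)" .
  obtain P ls where len: "length ls = n" and cp: "char_poly (laplacian n E) = (\<Prod>l\<leftarrow>ls. [:-l,1:])"
    and sp: "spec n (\<lambda>i j. P$$(i,j)) (\<lambda>i k. laplacian n E $$ (i,k)) (\<lambda>j. ls!j)"
    using alg_spec[OF sg] by blast
  interpret spec n "\<lambda>i j. P$$(i,j)" "\<lambda>i k. laplacian n E $$ (i,k)" "\<lambda>j. ls!j" by (rule sp)
  have le: "2 \<le> card {j\<in>{0..<n}. ls!j \<le> s}"
  proof (rule count_le_ge2[of "\<lambda>_. 1" x])
    fix al be :: real assume ab: "(al, be) \<noteq> (0,0)"
    have q: "qf n (\<lambda>i k. laplacian n E $$ (i,k)) (\<lambda>i. al * 1 + be * x i) = be^2 * (s * nsq n x)"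
      unfolding qf_lap[OF sg] ef_affine efx by simp
    have ns: "nsq n (\<lambda>i. al * 1 + be * x i) = al^2 * n + be^2 * nsq n x"
      unfolding nsq_affine xs by simp
    have "al^2 * n + be^2 * nsq n x > 0"
    proof (cases "be = 0")
      case True
      hence "al \<noteq> 0" using ab by auto
      thus ?thesis using True npos by simp
    next
      case False
      hence "be^2 * nsq n x > 0" using xpos by simp
      moreover have "al^2 * n \<ge> 0" by simp
      ultimately show ?thesis by linarith
    qed
    moreover have "be^2 * (s * nsq n x) \<le> s * (al^2 * n + be^2 * nsq n x)"
    proof -
      have "s \<ge> 0" by (simp add: s_def)
      hence "s * (al^2 * n) \<ge> 0" by simp
      thus ?thesis by (simp add: algebra_simps)
    qed
    ultimately show "nsq n (\<lambda>i. al * 1 + be * x i) > 0 \<and>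
        qf n (\<lambda>i k. laplacian n E $$ (i,k)) (\<lambda>i. al * 1 + be * x i) \<le> s * nsq n (\<lambda>i. al * 1 + be * x i)"
      unfolding q ns by simp
  qed
  have lt: "card {j\<in>{0..<n}. ls!j < s} \<le> 1"
  proof (rule count_lt_le1[of "\<lambda>_. 1"])
    fix y :: "nat \<Rightarrow> real" assume "(\<Sum>i=0..<n. 1 * y i) = 0"
    hence y0: "(\<Sum>i=0..<n. y i) = 0" by simp
    have "ef n E y \<ge> 2 * real (card S0) * nsq n y"
      by (rule ef_lower[OF sg S0V _ y0]) (use univ in auto)
    thus "qf n (\<lambda>i k. laplacian n E $$ (i,k)) y \<ge> s * nsq n y"
      unfolding qf_lap[OF sg] s_def by simp
  qed
  have "second_smallest_eigenvalue (laplacian n E) = s"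
    by (rule sse_eq[OF lap_carrier cp len le lt])
  thus ?thesis unfolding alg_conn_def' kap s_def by simp
qed

lemma chordal_clique:
  assumes sg: "simple_graph n E" and ch: "chordal n E" and SV: "S \<subseteq> verts n"
    and u: "u \<in> verts n - S" and v: "v \<in> verts n - S" and uv: "u \<noteq> v" "\<not> E u v"
    and join: "\<forall>w\<in>verts n - S. \<forall>s\<in>S. E w s"
    and x: "x \<in> S" and y: "y \<in> S" and xy: "x \<noteq> y"
  shows "E x y"
proof (rule ccontr)
  assume nxy: "\<not> E x y"
  define cs where "cs = [x, u, y, v]"
  have len: "length cs = 4" by (simp add: cs_def)
  have dist: "distinct cs" using u v x y xy uv by (auto simp: cs_def)
  have set: "set cs \<subseteq> verts n" using u v x y SV by (auto simp: cs_def)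
  have Eux: "E u x" "E u y" "E v x" "E v y" using join u v x y by auto
  hence Exu: "E x u" "E y u" "E x v" "E y v" using sg_sym[OF sg] by blast+
  have nyx: "\<not> E y x" using nxy sg_sym[OF sg] by blast
  have nvu: "\<not> E v u" using uv sg_sym[OF sg] by blast
  have cyc: "\<forall>i < length cs. E (cs ! i) (cs ! ((i + 1) mod length cs))"
  proof (intro allI impI)
    fix i assume "i < length cs"
    hence "i = 0 \<or> i = 1 \<or> i = 2 \<or> i = 3" using len by auto
    thus "E (cs ! i) (cs ! ((i + 1) mod length cs))" using Eux Exu by (auto simp: cs_def)
  qed
  obtain i j where ij: "i < length cs" "j < length cs" "i \<noteq> j" "j \<noteq> (i + 1) mod length cs"
      "i \<noteq> (j + 1) mod length cs" "E (cs ! i) (cs ! j)"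
    using ch len dist set cyc unfolding chordal_def by (metis order_refl)
  have "i = 0 \<or> i = 1 \<or> i = 2 \<or> i = 3" "j = 0 \<or> j = 1 \<or> j = 2 \<or> j = 3" using ij len by auto
  thus False using ij nxy nyx uv(2) nvu by (auto simp: cs_def)
qed



theorem mainTheorem2:
  fixes n :: nat and E :: "nat \<Rightarrow> nat \<Rightarrow> bool"
  assumes "simple_graph n E"
    and "chordal n E"
    and "connected_on E (verts n)"
    and "\<not> complete_graph n E"
  shows "(real (vertex_connectivity n E) = algebraic_connectivity n E \<longleftrightarrow>
            (minimal_vertex_separator n E (\<Inter> {S. minimal_vertex_separator n E S}) \<and>
             (\<forall>x \<in> \<Inter> {S. minimal_vertex_separator n E S}. universal n E x)))
       \<and> (\<forall>S. minimal_vertex_separator n E S \<and> (\<forall>x\<in>S. universal n E x) \<longrightarrow>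
            (\<forall>T. minimal_vertex_separator n E T \<longrightarrow> S \<subseteq> T) \<and>
            (\<forall>T. minimal_vertex_separator n E T \<and> (\<forall>x\<in>T. universal n E x) \<longrightarrow> T = S))"
proof -
  note sg = assms(1) and ch = assms(2) and conn = assms(3) and ncomp = assms(4)
  have sub: "S \<subseteq> T" if "\<forall>x\<in>S. universal n E x" "minimal_vertex_separator n E T" for S T
    using universal_in_sep[OF sg] that by blast
  have part2: "\<forall>S. minimal_vertex_separator n E S \<and> (\<forall>x\<in>S. universal n E x) \<longrightarrow>
            (\<forall>T. minimal_vertex_separator n E T \<longrightarrow> S \<subseteq> T) \<and>
            (\<forall>T. minimal_vertex_separator n E T \<and> (\<forall>x\<in>T. universal n E x) \<longrightarrow> T = S)"
    using sub by (blast intro: subset_antisym)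
  have part1: "real (vertex_connectivity n E) = algebraic_connectivity n E \<longleftrightarrow>
            (minimal_vertex_separator n E (\<Inter> {S. minimal_vertex_separator n E S}) \<and>
             (\<forall>x \<in> \<Inter> {S. minimal_vertex_separator n E S}. universal n E x))"
  proof
    assume eq: "real (vertex_connectivity n E) = algebraic_connectivity n E"
    obtain S where S: "S \<subseteq> verts n" "\<not> connected_on E (verts n - S)" "vertex_connectivity n E = card S"
      and min: "\<forall>T. T \<subseteq> verts n \<and> \<not> connected_on E (verts n - T) \<longrightarrow> card S \<le> card T"
      using kappa_exists[OF sg ncomp] by blast
    have join: "\<forall>w\<in>verts n - S. \<forall>s\<in>S. E w s"
      by (rule dir1[OF sg conn S(1) S(2)]) (use eq S(3) in simp)
    obtain u v where uv: "u \<in> verts n - S" "v \<in> verts n - S" "(u, v) \<notin> (induced_rel E (verts n - S))\<^sup>*"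
      using S(2) unfolding connected_on_def by blast
    have une: "u \<noteq> v" using uv by auto
    have nuv: "\<not> E u v"
    proof
      assume "E u v"
      hence "(u, v) \<in> (induced_rel E (verts n - S))\<^sup>*" using uv by (intro rel_step) auto
      thus False using uv by simp
    qed
    have univ: "\<forall>x\<in>S. universal n E x"
    proof
      fix x assume x: "x \<in> S"
      show "universal n E x" unfolding universal_def
      proof (intro conjI ballI impI)
        show "x \<in> verts n" using x S(1) by auto
        fix w assume w: "w \<in> verts n" "w \<noteq> x"
        show "E x w"
        proof (cases "w \<in> S")
          case True
          thus ?thesis using chordal_clique[OF sg ch S(1) uv(1) uv(2) une nuv join x True] w by simp
        next
          case False
          hence "E w x" using join w x by auto
          thus ?thesis using sg_sym[OF sg] by blast
        qed
      qed
    qed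
    have fS: "finite S" using S(1) finite_subset by (auto simp: verts_def)
    have mvs: "minimal_vertex_separator n E S"
      unfolding minimal_vertex_separator_def
    proof (intro bexI conjI)
      show "u \<noteq> v" "\<not> E u v" by fact+
      show "u \<in> verts n" "v \<in> verts n" using uv by auto
      show "minimal_uv_separator n E S u v" unfolding minimal_uv_separator_def
      proof (intro conjI allI impI)
        show "uv_separator n E S u v" unfolding uv_separator_def using S(1) uv by auto
        fix T assume TS: "T \<subset> S"
        show "\<not> uv_separator n E T u v"
        proof
          assume sepT: "uv_separator n E T u v"
          hence "T \<subseteq> verts n" "\<not> connected_on E (verts n - T)"
            unfolding uv_separator_def connected_on_def by auto
          hence "card S \<le> card T" using min by blast
          moreover have "card T < card S" by (rule psubset_card_mono[OF fS TS])
          ultimately show False by simp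
        qed
      qed
    qed
    have I: "\<Inter> {S. minimal_vertex_separator n E S} = S"
    proof
      show "\<Inter> {S. minimal_vertex_separator n E S} \<subseteq> S" using mvs by blast
      show "S \<subseteq> \<Inter> {S. minimal_vertex_separator n E S}" using sub[OF univ] by blast
    qed
    show "minimal_vertex_separator n E (\<Inter> {S. minimal_vertex_separator n E S}) \<and>
             (\<forall>x \<in> \<Inter> {S. minimal_vertex_separator n E S}. universal n E x)"
      unfolding I using mvs univ by blast
  next
    assume H: "minimal_vertex_separator n E (\<Inter> {S. minimal_vertex_separator n E S}) \<and>
             (\<forall>x \<in> \<Inter> {S. minimal_vertex_separator n E S}. universal n E x)"
    show "real (vertex_connectivity n E) = algebraic_connectivity n E"
      using dir2[OF sg] H by blast
  qed
  show ?thesis using part1 part2 by blast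
qed


end
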